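(* Let $(X,d)$ be a path-connected metric space, $x_0\in X$, $n\geq1$. For every $r>0$ there exists $(\mathscr{U},U_0)\in\mathrm{cov}(X)$ such that $\mathrm{Span}_n(\mathscr{U},x_0)\leq B_\rho(e,r)$, where $B_\rho(e,r)=\{a\in\pi_n(X,x_0)\mid\rho(a,e)<r\}$.
   Context: Identify $n$-loops with based maps $(S^n,d_0)\to(X,x_0)$, with uniform metric $\mu(\alpha,\beta)=\sup_t d(\alpha(t),\beta(t))$; $\rho(a,b)=\inf\{\mu(\alpha,\beta)\mid\alpha\in a,\beta\in b\}$ on $\pi_n(X,x_0)$, $e$ the identity. $\mathrm{cov}(X)$ is the set of pairs $(\mathscr{U},U_0)$ with $\mathscr{U}$ a locally finite open cover of $X$ and $U_0\in\mathscr{U}$ containing $x_0$. For an open cover $\mathscr{U}$, the $n$-th Spanier group $\mathrm{Span}_n(\mathscr{U},x_0)$ is the subgroup of $\pi_n(X,x_0)$ generated by all classes $[\gamma\ast f]$ where $\gamma:[0,1]\to X$ is a path with $\gamma(0)=x_0$, $f:(S^n,d_0)\to(X,\gamma(1))$ has image in some $U\in\mathscr{U}$, and $\gamma\ast f:(S^n,d_0)\to(X,x_0)$ is the path-conjugate (the standard map obtained by precomposing with a fixed retraction $S^n\times[0,1]\to S^n\times\{0\}\cup\{d_0\}\times[0,1]$ the map that is $f$ on $S^n\times\{0\}$ and runs along $\gamma$ on $\{d_0\}\times[0,1]$; it represents the image of $[f]$ under the change-of-basepoint isomorphism along $\gamma$). *)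

theory Defs
  imports "HOL-Analysis.Analysis" "HOL-Algebra.Generated_Groups"
begin

text \<open>The n-cube is cbox 0 1 in real^'n (n = CARD('n));
  its boundary is cbox 0 1 - box 0 1. Based maps (S^n,d0) -> (X,x0) correspond
  to maps of the cube sending the boundary to x0 (via the quotient I^n/boundary = S^n),
  with the same image sets, hence the same uniform metric.\<close>

definition ncube :: "(real^'n) set" where
  "ncube = cbox 0 1"

definition nbdry :: "(real^'n) set" where
  "nbdry = cbox 0 1 - box 0 1"

definition nloop :: "'a::metric_space set \<Rightarrow> 'a \<Rightarrow> (real^'n \<Rightarrow> 'a) \<Rightarrow> bool" where
  "nloop X p f \<longleftrightarrow> continuous_on ncube f \<and> f ` ncube \<subseteq> X \<and> (\<forall>x\<in>nbdry. f x = p)"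

definition based_homotopic :: "'a::metric_space set \<Rightarrow> 'a \<Rightarrow> (real^'n \<Rightarrow> 'a) \<Rightarrow> (real^'n \<Rightarrow> 'a) \<Rightarrow> bool" where
  "based_homotopic X p f g \<longleftrightarrow>
     homotopic_with_canon (\<lambda>h. \<forall>x\<in>nbdry. h x = p) ncube X f g"

definition loop_class :: "'a::metric_space set \<Rightarrow> 'a \<Rightarrow> (real^'n \<Rightarrow> 'a) \<Rightarrow> (real^'n \<Rightarrow> 'a) set" where
  "loop_class X p f = {g. nloop X p g \<and> based_homotopic X p f g}"

definition pi_n_set :: "'a::metric_space set \<Rightarrow> 'a \<Rightarrow> (real^'n \<Rightarrow> 'a) set set" where
  "pi_n_set X p = {loop_class X p f | f. nloop X p f}"

definition coord0 :: "'n::finite" where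
  "coord0 = (SOME i. True)"

definition loop_concat :: "(real^'n \<Rightarrow> 'a) \<Rightarrow> (real^'n \<Rightarrow> 'a) \<Rightarrow> (real^'n \<Rightarrow> 'a)" where
  "loop_concat f g = (\<lambda>x.
     if x $ coord0 \<le> 1/2 then f (\<chi> j. if j = coord0 then 2 * x $ coord0 else x $ j)
     else g (\<chi> j. if j = coord0 then 2 * x $ coord0 - 1 else x $ j))"

definition pi_n :: "'a::metric_space set \<Rightarrow> 'a \<Rightarrow> ((real^'n \<Rightarrow> 'a) set) monoid" where
  "pi_n X p = \<lparr> carrier = pi_n_set X p,
      mult = (\<lambda>a b. loop_class X p (loop_concat (SOME f. f \<in> a) (SOME g. g \<in> b))),
      one = loop_class X p (\<lambda>x. p) \<rparr>"

definition loop_mu :: "(real^'n \<Rightarrow> 'a::metric_space) \<Rightarrow> (real^'n \<Rightarrow> 'a) \<Rightarrow> real" where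
  "loop_mu \<alpha> \<beta> = (SUP t\<in>ncube. dist (\<alpha> t) (\<beta> t))"

definition loop_rho :: "(real^'n \<Rightarrow> 'a::metric_space) set \<Rightarrow> (real^'n \<Rightarrow> 'a) set \<Rightarrow> real" where
  "loop_rho a b = (INF (\<alpha>, \<beta>)\<in>a \<times> b. loop_mu \<alpha> \<beta>)"

definition rho_ball :: "'a::metric_space set \<Rightarrow> 'a \<Rightarrow> real \<Rightarrow> (real^'n \<Rightarrow> 'a) set set" where
  "rho_ball X p r = {a \<in> pi_n_set X p. loop_rho a (\<one>\<^bsub>pi_n X p\<^esub>) < r}"

definition locally_finite_open_cover :: "'a::metric_space set \<Rightarrow> 'a set set \<Rightarrow> bool" where
  "locally_finite_open_cover X \<U> \<longleftrightarrow>
     (\<forall>U\<in>\<U>. openin (top_of_set X) U) \<and> \<Union>\<U> = X \<and>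
     (\<forall>x\<in>X. \<exists>V. openin (top_of_set X) V \<and> x \<in> V \<and> finite {U\<in>\<U>. U \<inter> V \<noteq> {}})"

definition cov :: "'a::metric_space set \<Rightarrow> 'a \<Rightarrow> ('a set set \<times> 'a set) set" where
  "cov X p = {(\<U>, U0). locally_finite_open_cover X \<U> \<and> U0 \<in> \<U> \<and> p \<in> U0}"

text \<open>This characterizes the
  class of gamma * f, i.e. the change-of-basepoint image of [f] along gamma.\<close>
definition path_conjugate :: "'a::metric_space set \<Rightarrow> (real \<Rightarrow> 'a) \<Rightarrow> (real^'n \<Rightarrow> 'a) \<Rightarrow> (real^'n \<Rightarrow> 'a) \<Rightarrow> bool" where
  "path_conjugate X \<gamma> f g \<longleftrightarrow>
     (\<exists>H. continuous_on ({0..1} \<times> ncube) H \<and> H ` ({0..1} \<times> ncube) \<subseteq> X \<and>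
        (\<forall>x\<in>ncube. H (0, x) = g x \<and> H (1, x) = f x) \<and>
        (\<forall>t\<in>{0..1}. \<forall>x\<in>nbdry. H (t, x) = \<gamma> t))"

definition spanier_gens :: "'a::metric_space set \<Rightarrow> 'a set set \<Rightarrow> 'a \<Rightarrow> (real^'n \<Rightarrow> 'a) set set" where
  "spanier_gens X \<U> p = {loop_class X p g | g \<gamma> f U.
      path \<gamma> \<and> path_image \<gamma> \<subseteq> X \<and> pathstart \<gamma> = p \<and>
      nloop X (pathfinish \<gamma>) f \<and> U \<in> \<U> \<and> f ` ncube \<subseteq> U \<and>
      nloop X p g \<and> path_conjugate X \<gamma> f g}"

definition spanier_group :: "'a::metric_space set \<Rightarrow> 'a set set \<Rightarrow> 'a \<Rightarrow> (real^'n \<Rightarrow> 'a) set set" where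
  "spanier_group X \<U> p = generate (pi_n X p) (spanier_gens X \<U> p)"

end

theory Submission
  imports Defs
begin


definition rad :: "nat \<Rightarrow> real" where "rad n = (1/2)^(Suc n)"

lemma rad_pos: "rad n > 0" by (simp add: rad_def)
lemma rad_Suc: "rad (Suc n) = rad n / 2" by (simp add: rad_def)
lemma rad_mono: "m \<le> n \<Longrightarrow> rad n \<le> rad m"
  unfolding rad_def by (rule power_decreasing) auto
lemma rad_small: "e > 0 \<Longrightarrow> \<exists>n. rad n < e"
proof -
  assume "e > 0"
  then obtain n where "(1/2::real)^n < e" using real_arch_pow_inv[of e "1/2"] by auto
  moreover have "(1/2::real) * (1/2)^n \<le> (1/2)^n" by simp
  ultimately have "rad n < e" unfolding rad_def power_Suc by linarith
  then show ?thesis by blast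
qed

definition stepD :: "('a::metric_space \<Rightarrow> 'a) \<Rightarrow> real \<Rightarrow> nat \<Rightarrow> 'a set \<Rightarrow> 'a \<Rightarrow> 'a set" where
 "stepD fs \<rho> n A s = \<Union> {ball c (rad n) | c. fs c = s \<and> c \<notin> A \<and> ball c (3 * rad n) \<subseteq> ball s \<rho>}"

primrec cumD :: "('a::metric_space \<Rightarrow> 'a) \<Rightarrow> real \<Rightarrow> nat \<Rightarrow> 'a set" where
 "cumD fs \<rho> 0 = {}"
| "cumD fs \<rho> (Suc n) = cumD fs \<rho> n \<union> (\<Union>s. stepD fs \<rho> n (cumD fs \<rho> n) s)"

definition DD where "DD fs \<rho> n s = stepD fs \<rho> n (cumD fs \<rho> n) s"

lemma mem_DD: "x \<in> DD fs \<rho> n s \<longleftrightarrow> (\<exists>c. fs c = s \<and> c \<notin> cumD fs \<rho> n \<and> ball c (3 * rad n) \<subseteq> ball s \<rho> \<and> x \<in> ball c (rad n))"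
  unfolding DD_def stepD_def by blast

lemma open_DD: "open (DD fs \<rho> n s)"
  unfolding DD_def stepD_def by auto

lemma DD_sub: "DD fs \<rho> n s \<subseteq> ball s \<rho>"
proof
  fix x assume "x \<in> DD fs \<rho> n s"
  then obtain c where "ball c (3 * rad n) \<subseteq> ball s \<rho>" "x \<in> ball c (rad n)" unfolding mem_DD by blast
  moreover have "ball c (rad n) \<subseteq> ball c (3 * rad n)" using rad_pos[of n] by (intro subset_ball) auto
  ultimately show "x \<in> ball s \<rho>" by blast
qed

lemma cumD_mono: "m \<le> n \<Longrightarrow> cumD fs \<rho> m \<subseteq> cumD fs \<rho> n"
  by (induction n) (auto simp: le_Suc_eq)

lemma DD_sub_cumD: "m < n \<Longrightarrow> DD fs \<rho> m s \<subseteq> cumD fs \<rho> n"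
proof -
  assume "m < n"
  have "DD fs \<rho> m s \<subseteq> cumD fs \<rho> (Suc m)" by (auto simp: DD_def)
  also have "\<dots> \<subseteq> cumD fs \<rho> n" using \<open>m < n\<close> by (intro cumD_mono) auto
  finally show ?thesis .
qed

lemma cumD_DD: "x \<in> cumD fs \<rho> n \<Longrightarrow> \<exists>k<n. \<exists>t. x \<in> DD fs \<rho> k t"
  by (induction n) (auto simp: DD_def less_Suc_eq)

lemma stone_core:
  fixes fs :: "'a::metric_space \<Rightarrow> 'a"
  assumes fs_in: "\<And>c. c \<in> ball (fs c) \<rho>"
    and sep: "\<And>c c'. fs c \<noteq> fs c' \<Longrightarrow> c' \<notin> ball (fs c) \<rho> \<or> c \<notin> ball (fs c') \<rho>"
  shows "\<exists>n s. x \<in> DD fs \<rho> n s"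
    and "\<exists>V. open V \<and> x \<in> V \<and> finite {W \<in> range (\<lambda>(n,s). DD fs \<rho> n s). W \<inter> V \<noteq> {}}"
proof -
  show cov: "\<exists>n s. x \<in> DD fs \<rho> n s" for x
  proof -
    obtain e where e: "e > 0" "ball x e \<subseteq> ball (fs x) \<rho>"
      by (rule openE[OF open_ball fs_in[of x]])
    obtain n where n: "rad n < e/3" using rad_small[of "e/3"] e by auto
    show ?thesis
    proof (cases "x \<in> cumD fs \<rho> n")
      case True
      then obtain k t where "k < n" "x \<in> DD fs \<rho> k t" using cumD_DD by blast
      then show ?thesis by blast
    next
      case False
      have "ball x (3 * rad n) \<subseteq> ball x e" by (rule subset_ball) (use n in linarith)
      then have "ball x (3 * rad n) \<subseteq> ball (fs x) \<rho>" using e by blast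
      then have "x \<in> DD fs \<rho> n (fs x)" unfolding mem_DD using False rad_pos[of n]
        by (intro exI[of _ x]) simp
      then show ?thesis by blast
    qed
  qed
  obtain n s where xn: "x \<in> DD fs \<rho> n s" using cov by blast
  obtain e where e: "e > 0" "ball x e \<subseteq> DD fs \<rho> n s"
    by (rule openE[OF open_DD xn])
  obtain j where j: "rad j < e" using rad_small e by blast
  have "ball x (rad j) \<subseteq> ball x e" by (rule subset_ball) (use j in linarith)
  then have bj: "ball x (rad j) \<subseteq> DD fs \<rho> n s" using e by blast
  define m where "m = n + j + 1"
  define V where "V = ball x (rad m)"
  have A: "DD fs \<rho> i t \<inter> V = {}" if "i \<ge> m" for i t
  proof (rule ccontr)
    assume "DD fs \<rho> i t \<inter> V \<noteq> {}"
    then obtain q where q: "q \<in> DD fs \<rho> i t" "q \<in> V" by blast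
    then obtain c where c: "c \<notin> cumD fs \<rho> i" "q \<in> ball c (rad i)" using q(1) unfolding mem_DD by blast
    have "DD fs \<rho> n s \<subseteq> cumD fs \<rho> i" using that by (intro DD_sub_cumD) (auto simp: m_def)
    then have "c \<notin> ball x (rad j)" using c bj by blast
    then have "dist x c \<ge> rad j" by simp
    moreover have "dist x c < rad m + rad i"
    proof -
      have "dist x q < rad m" using q(2) by (simp add: V_def)
      moreover have "dist q c < rad i" using c(2) by (simp add: dist_commute)
      moreover have "dist x c \<le> dist x q + dist q c" by (rule dist_triangle)
      ultimately show ?thesis by linarith
    qed
    moreover have "rad i \<le> rad m" using that rad_mono by blast
    moreover have "2 * rad m \<le> rad j"
    proof -
      have "2 * rad m = rad (n + j)" by (simp add: m_def rad_Suc)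
      also have "\<dots> \<le> rad j" by (rule rad_mono) simp
      finally show ?thesis .
    qed
    ultimately show False by linarith
  qed
  have B: "t = u" if im: "i < m" and nt: "DD fs \<rho> i t \<inter> V \<noteq> {}" and nu: "DD fs \<rho> i u \<inter> V \<noteq> {}" for i t u
  proof (rule ccontr)
    assume tu: "t \<noteq> u"
    obtain q where q: "q \<in> DD fs \<rho> i t" "q \<in> V" using nt by blast
    then obtain c where c: "fs c = t" "ball c (3 * rad i) \<subseteq> ball t \<rho>" "q \<in> ball c (rad i)" using q(1) unfolding mem_DD by blast
    obtain q' where q': "q' \<in> DD fs \<rho> i u" "q' \<in> V" using nu by blast
    then obtain c' where c': "fs c' = u" "ball c' (3 * rad i) \<subseteq> ball u \<rho>" "q' \<in> ball c' (rad i)" using q'(1) unfolding mem_DD by blast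
    have "2 * rad m \<le> rad i"
    proof -
      have "2 * rad m = rad (n + j)" by (simp add: m_def rad_Suc)
      also have "\<dots> \<le> rad i" by (rule rad_mono) (use im in \<open>simp add: m_def\<close>)
      finally show ?thesis .
    qed
    moreover have "dist c c' < rad i + rad m + rad m + rad i"
    proof -
      have "dist c q < rad i" using c(3) by simp
      moreover have "dist q x < rad m" using q(2) by (simp add: V_def dist_commute)
      moreover have "dist x q' < rad m" using q'(2) by (simp add: V_def)
      moreover have "dist q' c' < rad i" using c'(3) by (simp add: dist_commute)
      moreover have "dist c c' \<le> dist c q + dist q c'" by (rule dist_triangle)
      moreover have "dist q c' \<le> dist q x + dist x c'" by (rule dist_triangle)
      moreover have "dist x c' \<le> dist x q' + dist q' c'" by (rule dist_triangle)
      ultimately show ?thesis by linarith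
    qed
    ultimately have d1: "dist c c' < 3 * rad i" by linarith
    have d: "dist c c' < 3 * rad i" "dist c' c < 3 * rad i" using d1 by (simp_all add: dist_commute)
    from sep[of c c'] tu c c' have "c' \<notin> ball t \<rho> \<or> c \<notin> ball u \<rho>" by auto
    moreover have "c' \<in> ball t \<rho>" using c(2) d(1) by auto
    moreover have "c \<in> ball u \<rho>" using c'(2) d(2) by auto
    ultimately show False by blast
  qed
  define T where "T i = (SOME t. DD fs \<rho> i t \<inter> V \<noteq> {})" for i
  have sub: "{W \<in> range (\<lambda>(n,s). DD fs \<rho> n s). W \<inter> V \<noteq> {}} \<subseteq> (\<lambda>i. DD fs \<rho> i (T i)) ` {..<m}"
  proof
    fix W assume "W \<in> {W \<in> range (\<lambda>(n,s). DD fs \<rho> n s). W \<inter> V \<noteq> {}}"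
    then obtain i t where W1: "W = DD fs \<rho> i t" and W2: "DD fs \<rho> i t \<inter> V \<noteq> {}" by auto
    have im: "i < m"
    proof (rule ccontr)
      assume "\<not> i < m"
      then have "m \<le> i" by simp
      then have "DD fs \<rho> i t \<inter> V = {}" by (rule A)
      then show False using W2 by simp
    qed
    have "DD fs \<rho> i (T i) \<inter> V \<noteq> {}" unfolding T_def by (rule someI[of _ t]) (rule W2)
    then have "T i = t" by (rule B[OF im _ W2])
    then have "W = DD fs \<rho> i (T i)" using W1 by simp
    then show "W \<in> (\<lambda>i. DD fs \<rho> i (T i)) ` {..<m}" using im by blast
  qed
  have fin: "finite {W \<in> range (\<lambda>(n,s). DD fs \<rho> n s). W \<inter> V \<noteq> {}}"
    by (rule finite_subset[OF sub]) simp
  have oV: "open V" and xV: "x \<in> V" using rad_pos[of m] by (auto simp: V_def)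
  show "\<exists>V. open V \<and> x \<in> V \<and> finite {W \<in> range (\<lambda>(n,s). DD fs \<rho> n s). W \<inter> V \<noteq> {}}"
    using oV xV fin by blast
qed

lemma stone:
  fixes \<rho> :: real
  assumes "\<rho> > 0"
  shows "\<exists>\<W> :: 'a::metric_space set set. (\<forall>W\<in>\<W>. open W \<and> (\<exists>s. W \<subseteq> ball s \<rho>)) \<and> \<Union>\<W> = UNIV \<and>
           (\<forall>x. \<exists>V. open V \<and> x \<in> V \<and> finite {W\<in>\<W>. W \<inter> V \<noteq> {}})"
proof -
  obtain r :: "'a rel" where wo: "well_order_on UNIV r" using well_order_on by blast
  then have wf: "wf (r - Id)" and tot: "total_on UNIV r"
    by (auto simp: well_order_on_def linear_order_on_def)
  define fs where "fs c = (SOME s. c \<in> ball s \<rho> \<and> (\<forall>t. c \<in> ball t \<rho> \<longrightarrow> (t,s) \<notin> r - Id))" for c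
  have fsP: "c \<in> ball (fs c) \<rho> \<and> (\<forall>t. c \<in> ball t \<rho> \<longrightarrow> (t, fs c) \<notin> r - Id)" for c
  proof -
    have "c \<in> {s. c \<in> ball s \<rho>}" using assms by simp
    then obtain z where "z \<in> {s. c \<in> ball s \<rho>}" "\<And>y. (y, z) \<in> r - Id \<Longrightarrow> y \<notin> {s. c \<in> ball s \<rho>}"
      using wfE_min[OF wf] by metis
    then have "c \<in> ball z \<rho> \<and> (\<forall>t. c \<in> ball t \<rho> \<longrightarrow> (t,z) \<notin> r - Id)" by blast
    then show ?thesis unfolding fs_def by (rule someI)
  qed
  have sep: "c' \<notin> ball (fs c) \<rho> \<or> c \<notin> ball (fs c') \<rho>" if "fs c \<noteq> fs c'" for c c'
  proof -
    have "(fs c, fs c') \<in> r \<or> (fs c', fs c) \<in> r" using tot that by (auto simp: total_on_def)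
    then show ?thesis
    proof
      assume "(fs c, fs c') \<in> r"
      then have "(fs c, fs c') \<in> r - Id" using that by auto
      then have "c' \<notin> ball (fs c) \<rho>" using fsP[of c'] by blast
      then show ?thesis by blast
    next
      assume "(fs c', fs c) \<in> r"
      then have "(fs c', fs c) \<in> r - Id" using that by auto
      then have "c \<notin> ball (fs c') \<rho>" using fsP[of c] by blast
      then show ?thesis by blast
    qed
  qed
  have fs_in: "c \<in> ball (fs c) \<rho>" for c using fsP by blast
  note cov = stone_core(1)[of fs \<rho>, OF fs_in sep]
  note lf = stone_core(2)[of fs \<rho>, OF fs_in sep]
  let ?W = "range (\<lambda>(n,s). DD fs \<rho> n s)"
  have "\<forall>W\<in>?W. open W \<and> (\<exists>s. W \<subseteq> ball s \<rho>)"
  proof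
    fix W assume "W \<in> ?W" then obtain n s where "W = DD fs \<rho> n s" by auto
    then show "open W \<and> (\<exists>s. W \<subseteq> ball s \<rho>)" using open_DD DD_sub by blast
  qed
  moreover have "\<Union>?W = UNIV"
  proof -
    have "x \<in> \<Union>?W" for x using cov[of x] by auto
    then show ?thesis by blast
  qed
  moreover have "\<forall>x. \<exists>V. open V \<and> x \<in> V \<and> finite {W\<in>?W. W \<inter> V \<noteq> {}}"
    using lf by blast
  ultimately show ?thesis by blast
qed



definition Rv :: "real \<Rightarrow> real^'n::finite \<Rightarrow> real^'n" where
  "Rv a x = (\<chi> j. if j = coord0 then a else x $ j)"

lemma Rv_nth [simp]: "Rv a x $ j = (if j = coord0 then a else x $ j)"
  by (simp add: Rv_def)

lemma Rv_Rv [simp]: "Rv a (Rv b x) = Rv a x"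
  by (simp add: vec_eq_iff)

lemma Rv_self [simp]: "Rv (x $ coord0) x = x"
  by (simp add: vec_eq_iff)

lemma concat_alt: "loop_concat f g x = (if x $ coord0 \<le> 1/2 then f (Rv (2 * x $ coord0) x)
    else g (Rv (2 * x $ coord0 - 1) x))"
  by (simp add: loop_concat_def Rv_def)

lemma mem_ncube: "x \<in> ncube \<longleftrightarrow> (\<forall>j. 0 \<le> x $ j \<and> x $ j \<le> 1)"
  by (simp add: ncube_def mem_box_cart)

lemma mem_nbdry: "x \<in> nbdry \<longleftrightarrow> x \<in> ncube \<and> (\<exists>j. x $ j = 0 \<or> x $ j = 1)"
proof -
  have *: "x \<in> nbdry \<longleftrightarrow> x \<in> ncube \<and> \<not> (\<forall>j. 0 < x $ j \<and> x $ j < 1)"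
    by (simp add: nbdry_def ncube_def mem_box_cart)
  show ?thesis
  proof
    assume "x \<in> nbdry"
    then have c: "x \<in> ncube" and "\<not> (\<forall>j. 0 < x $ j \<and> x $ j < 1)" using * by auto
    then obtain j where j: "\<not> (0 < x $ j \<and> x $ j < 1)" by blast
    have "0 \<le> x $ j" "x $ j \<le> 1" using c by (auto simp: mem_ncube)
    then have "x $ j = 0 \<or> x $ j = 1" using j by linarith
    then show "x \<in> ncube \<and> (\<exists>j. x $ j = 0 \<or> x $ j = 1)" using c by blast
  next
    assume H: "x \<in> ncube \<and> (\<exists>j. x $ j = 0 \<or> x $ j = 1)"
    then obtain j where j: "x $ j = 0 \<or> x $ j = 1" by blast
    then have "\<not> (0 < x $ j \<and> x $ j < 1)" by auto
    then show "x \<in> nbdry" using * H by blast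
  qed
qed

lemma nbdry_sub: "nbdry \<subseteq> ncube"
  by (auto simp: nbdry_def ncube_def)

lemma zero_nbdry: "0 \<in> nbdry"
  by (simp add: mem_nbdry mem_ncube)

lemma zero_ncube: "0 \<in> ncube"
  using zero_nbdry nbdry_sub by blast

lemma ncube_ne: "ncube \<noteq> {}"
  using zero_ncube by blast

lemma compact_ncube: "compact ncube"
  by (simp add: ncube_def)

lemma Rv_ncube: "x \<in> ncube \<Longrightarrow> 0 \<le> a \<Longrightarrow> a \<le> 1 \<Longrightarrow> Rv a x \<in> ncube"
  by (simp add: mem_ncube)

lemma Rv_nbdry_end: "x \<in> ncube \<Longrightarrow> a = 0 \<or> a = 1 \<Longrightarrow> Rv a x \<in> nbdry"
  unfolding mem_nbdry
  by (intro conjI Rv_ncube exI[of _ coord0]) auto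

lemma Rv_nbdry:
  assumes x: "x \<in> nbdry" and a: "0 \<le> a" "a \<le> 1"
    and e: "x $ coord0 = 0 \<or> x $ coord0 = 1 \<Longrightarrow> a = 0 \<or> a = 1"
  shows "Rv a x \<in> nbdry"
proof -
  have c: "x \<in> ncube" using x nbdry_sub by blast
  obtain j where j: "x $ j = 0 \<or> x $ j = 1" using x by (auto simp: mem_nbdry)
  show ?thesis
  proof (cases "j = coord0")
    case True
    then show ?thesis using e j c Rv_nbdry_end by blast
  next
    case False
    then have "Rv a x $ j = 0 \<or> Rv a x $ j = 1" using j by simp
    moreover have "Rv a x \<in> ncube" using c a by (rule Rv_ncube)
    ultimately show ?thesis unfolding mem_nbdry by blast
  qed
qed

lemma cont_Rv:
  assumes "continuous_on S a" "continuous_on S g"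
  shows "continuous_on S (\<lambda>z. Rv (a z) (g z))"
  unfolding Rv_def
proof (rule continuous_on_vec_lambda)
  fix j show "continuous_on S (\<lambda>z. if j = coord0 then a z else g z $ j)"
    by (cases "j = coord0") (simp_all add: assms continuous_on_component)
qed

section \<open>Homotopies\<close>

lemma bh_P:
  fixes h k :: "real^'n::finite \<Rightarrow> 'a"
  assumes hk: "\<And>x. x \<in> topspace (top_of_set ncube) \<Longrightarrow> h x = k x"
  shows "(\<forall>x\<in>nbdry. h x = p) = (\<forall>x\<in>nbdry. k x = p)"
proof -
  have "h x = k x" if "x \<in> nbdry" for x using hk[of x] nbdry_sub that by auto
  then show ?thesis by auto
qed

lemma based_homotopic_iff:
  "based_homotopic X p f g \<longleftrightarrow>
    (\<exists>K. continuous_on ({0..1::real} \<times> ncube) K \<and> K ` ({0..1::real} \<times> ncube) \<subseteq> X \<and>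
       (\<forall>x\<in>ncube. K (0,x) = f x \<and> K (1,x) = g x) \<and> (\<forall>t\<in>{0..1}. \<forall>x\<in>nbdry. K (t,x) = p))"
proof -
  have E: "based_homotopic X p f g \<longleftrightarrow>
           (\<exists>h. continuous_map (prod_topology (top_of_set {0..1::real}) (top_of_set ncube)) (top_of_set X) h \<and>
              (\<forall>x \<in> topspace (top_of_set ncube). h(0,x) = f x) \<and>
              (\<forall>x \<in> topspace (top_of_set ncube). h(1,x) = g x) \<and>
              (\<forall>t \<in> {0..1}. \<forall>x\<in>nbdry. h (t, x) = p))"
    unfolding based_homotopic_def
    by (rule homotopic_with[where P="\<lambda>h. \<forall>x\<in>nbdry. h x = p" and X="top_of_set ncube"]) (rule bh_P)
  show ?thesis
    unfolding E prod_topology_subtopology_eu continuous_map_subtopology_eu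
      topspace_euclidean_subtopology image_subset_iff_funcset
    by (simp only: conj_assoc ball_conj_distrib)
qed

lemma bh_imp_nloop:
  assumes "based_homotopic X p f g"
  shows "nloop X p f" "nloop X p g"
proof -
  have h: "homotopic_with_canon (\<lambda>h. \<forall>x\<in>nbdry. h x = p) ncube X f g"
    using assms by (simp add: based_homotopic_def)
  show "nloop X p f" "nloop X p g"
    unfolding nloop_def
    using homotopic_with_imp_continuous[OF h] homotopic_with_imp_subset1[OF h]
      homotopic_with_imp_subset2[OF h] homotopic_with_imp_property[OF h] by auto
qed

lemma bh_refl: "nloop X p f \<Longrightarrow> based_homotopic X p f f"
  unfolding based_homotopic_def nloop_def
  by (simp add: continuous_map_subtopology_eu image_subset_iff Pi_iff)

lemma bh_sym: "based_homotopic X p f g \<Longrightarrow> based_homotopic X p g f"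
  unfolding based_homotopic_def by (rule homotopic_with_symD)

lemma bh_trans: "based_homotopic X p f g \<Longrightarrow> based_homotopic X p g h \<Longrightarrow> based_homotopic X p f h"
  unfolding based_homotopic_def by (rule homotopic_with_trans)

lemma bh_cong:
  fixes f g f' g' :: "real^'n::finite \<Rightarrow> 'a::metric_space"
  assumes h: "based_homotopic X p f g" and f': "\<And>x. x \<in> ncube \<Longrightarrow> f' x = f x"
    and g': "\<And>x. x \<in> ncube \<Longrightarrow> g' x = g x"
  shows "based_homotopic X p f' g'"
  unfolding based_homotopic_def
proof (rule homotopic_with_eq[OF h[unfolded based_homotopic_def]])
  fix x :: "real^'n" assume "x \<in> topspace (top_of_set ncube)"
  then have "x \<in> ncube" by simp
  then show "f' x = f x" "g' x = g x" using f' g' by auto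
next
  fix h k :: "real^'n \<Rightarrow> 'a"
  assume "\<And>x. x \<in> topspace (top_of_set ncube) \<Longrightarrow> h x = k x"
  then show "(\<forall>x\<in>nbdry. h x = p) \<longleftrightarrow> (\<forall>x\<in>nbdry. k x = p)" by (rule bh_P)
qed

lemma class_eq:
  assumes fg: "based_homotopic X p f g"
  shows "loop_class X p f = loop_class X p g"
proof -
  have "based_homotopic X p f h \<longleftrightarrow> based_homotopic X p g h" for h
  proof
    assume "based_homotopic X p f h" then show "based_homotopic X p g h" by (rule bh_trans[OF bh_sym[OF fg]])
  next
    assume "based_homotopic X p g h" then show "based_homotopic X p f h" by (rule bh_trans[OF fg])
  qed
  then show ?thesis by (simp add: loop_class_def)
qed

lemma class_self: "nloop X p f \<Longrightarrow> f \<in> loop_class X p f"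
  unfolding loop_class_def by (simp add: bh_refl)

lemma class_mem:
  assumes "g \<in> loop_class X p f"
  shows "loop_class X p g = loop_class X p f"
proof -
  have "based_homotopic X p f g" using assms by (simp add: loop_class_def)
  then show ?thesis by (simp add: class_eq)
qed

lemma class_nloop: "g \<in> loop_class X p f \<Longrightarrow> nloop X p g"
  unfolding loop_class_def by blast

lemma nloop_cont: "nloop X p f \<Longrightarrow> continuous_on ncube f"
  by (simp add: nloop_def)

lemma nloop_img: "nloop X p f \<Longrightarrow> x \<in> ncube \<Longrightarrow> f x \<in> X"
  by (auto simp: nloop_def)

lemma nloop_bdry: "nloop X p f \<Longrightarrow> x \<in> nbdry \<Longrightarrow> f x = p"
  by (auto simp: nloop_def)

lemma nloop_const: "p \<in> X \<Longrightarrow> nloop X p (\<lambda>x. p)"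
  by (auto simp: nloop_def)

section \<open>Concatenation\<close>

lemma concat_cube1: "x \<in> ncube \<Longrightarrow> x $ coord0 \<le> 1/2 \<Longrightarrow> Rv (2 * x $ coord0) x \<in> ncube"
  by (rule Rv_ncube) (auto simp: mem_ncube)

lemma concat_cube2: "x \<in> ncube \<Longrightarrow> \<not> x $ coord0 \<le> 1/2 \<Longrightarrow> Rv (2 * x $ coord0 - 1) x \<in> ncube"
  by (rule Rv_ncube) (auto simp: mem_ncube)

lemma concat_bdry1: "x \<in> nbdry \<Longrightarrow> x $ coord0 \<le> 1/2 \<Longrightarrow> Rv (2 * x $ coord0) x \<in> nbdry"
  by (rule Rv_nbdry) (auto simp: mem_nbdry mem_ncube)

lemma concat_bdry2: "x \<in> nbdry \<Longrightarrow> \<not> x $ coord0 \<le> 1/2 \<Longrightarrow> Rv (2 * x $ coord0 - 1) x \<in> nbdry"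
  by (rule Rv_nbdry) (auto simp: mem_nbdry mem_ncube)

lemma concat_param:
  fixes F G :: "real \<times> (real^'n::finite) \<Rightarrow> 'a::metric_space"
  assumes F: "continuous_on ({0..1::real} \<times> ncube) F" "\<And>t y. t \<in> {0..1} \<Longrightarrow> y \<in> nbdry \<Longrightarrow> F (t,y) = p"
    and G: "continuous_on ({0..1::real} \<times> ncube) G" "\<And>t y. t \<in> {0..1} \<Longrightarrow> y \<in> nbdry \<Longrightarrow> G (t,y) = p"
  shows "continuous_on ({0..1::real} \<times> ncube) (\<lambda>z. loop_concat (\<lambda>y. F (fst z, y)) (\<lambda>y. G (fst z, y)) (snd z))"
proof -
  let ?A = "{0..1::real} \<times> (ncube :: (real^'n) set)"
  define A1 where "A1 = ?A \<inter> {z. snd z $ coord0 \<le> 1/2}"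
  define A2 where "A2 = ?A \<inter> {z. 1/2 \<le> snd z $ coord0}"
  have cc: "continuous_on UNIV (\<lambda>z::real \<times> (real^'n). snd z $ coord0)"
    by (intro continuous_on_component continuous_intros)
  have cA: "closed ?A" unfolding ncube_def by (intro closed_Times closed_atLeastAtMost closed_cbox)
  have c1: "closed A1" unfolding A1_def
    by (intro closed_Int cA closed_Collect_le cc continuous_on_const)
  have c2: "closed A2" unfolding A2_def
    by (intro closed_Int cA closed_Collect_le cc continuous_on_const)
  have eq: "?A = A1 \<union> A2" by (auto simp: A1_def A2_def)
  have p1: "continuous_on A1 (\<lambda>z. F (fst z, Rv (2 * snd z $ coord0) (snd z)))"
  proof (rule continuous_on_compose2[OF F(1)])
    show "continuous_on A1 (\<lambda>z. (fst z, Rv (2 * snd z $ coord0) (snd z)))"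
      by (intro continuous_intros cont_Rv continuous_on_component)
    show "(\<lambda>z. (fst z, Rv (2 * snd z $ coord0) (snd z))) ` A1 \<subseteq> ?A"
      by (auto simp: A1_def intro!: concat_cube1)
  qed
  have p2: "continuous_on A2 (\<lambda>z. G (fst z, Rv (2 * snd z $ coord0 - 1) (snd z)))"
  proof (rule continuous_on_compose2[OF G(1)])
    show "continuous_on A2 (\<lambda>z. (fst z, Rv (2 * snd z $ coord0 - 1) (snd z)))"
      by (intro continuous_intros cont_Rv continuous_on_component)
    show "(\<lambda>z. (fst z, Rv (2 * snd z $ coord0 - 1) (snd z))) ` A2 \<subseteq> ?A"
      by (auto simp: A2_def mem_ncube)
  qed
  have "continuous_on (A1 \<union> A2) (\<lambda>z. if snd z $ coord0 \<le> 1/2 then F (fst z, Rv (2 * snd z $ coord0) (snd z))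
      else G (fst z, Rv (2 * snd z $ coord0 - 1) (snd z)))"
  proof (rule continuous_on_cases[OF c1 c2 p1 p2], intro allI impI)
    fix z assume z: "z \<in> A1 \<and> \<not> snd z $ coord0 \<le> 1/2 \<or> z \<in> A2 \<and> snd z $ coord0 \<le> 1/2"
    then have h: "snd z $ coord0 = 1/2" "fst z \<in> {0..1}" "snd z \<in> ncube" by (auto simp: A1_def A2_def)
    have e1: "2 * snd z $ coord0 = 1" "2 * snd z $ coord0 - 1 = 0" using h(1) by simp_all
    have "F (fst z, Rv 1 (snd z)) = p" using F(2) h(2) Rv_nbdry_end[OF h(3)] by simp
    moreover have "G (fst z, Rv 0 (snd z)) = p" using G(2) h(2) Rv_nbdry_end[OF h(3)] by simp
    ultimately show "F (fst z, Rv (2 * snd z $ coord0) (snd z)) = G (fst z, Rv (2 * snd z $ coord0 - 1) (snd z))"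
      unfolding e1 by simp
  qed
  then show ?thesis unfolding eq[symmetric] by (simp add: concat_alt)
qed

lemma concat_cong:
  assumes "\<And>y. y \<in> ncube \<Longrightarrow> f y = f' y" "\<And>y. y \<in> ncube \<Longrightarrow> g y = g' y" "x \<in> ncube"
  shows "loop_concat f g x = loop_concat f' g' x"
  using assms concat_cube1[OF assms(3)] concat_cube2[OF assms(3)] by (simp add: concat_alt)

lemma concat_bdry:
  assumes "nloop X p f" "nloop X p g" "x \<in> nbdry"
  shows "loop_concat f g x = p"
  using assms concat_bdry1[OF assms(3)] concat_bdry2[OF assms(3)] by (simp add: concat_alt nloop_bdry)

lemma concat_img:
  assumes "nloop X p f" "nloop X p g" "x \<in> ncube"
  shows "loop_concat f g x \<in> X"
  using assms concat_cube1[OF assms(3)] concat_cube2[OF assms(3)] by (simp add: concat_alt nloop_img)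

lemma nloop_concat:
  assumes f: "nloop X p f" and g: "nloop X p g"
  shows "nloop X p (loop_concat f g)"
proof -
  have cf: "continuous_on ({0..1::real} \<times> ncube) (\<lambda>z. f (snd z))"
    by (rule continuous_on_compose2[OF nloop_cont[OF f]]) (auto intro: continuous_intros)
  have cg: "continuous_on ({0..1::real} \<times> ncube) (\<lambda>z. g (snd z))"
    by (rule continuous_on_compose2[OF nloop_cont[OF g]]) (auto intro: continuous_intros)
  have "continuous_on ({0..1::real} \<times> ncube) (\<lambda>z. loop_concat (\<lambda>y. (\<lambda>z. f (snd z)) (fst z, y)) (\<lambda>y. (\<lambda>z. g (snd z)) (fst z, y)) (snd z))"
    by (rule concat_param[where F="\<lambda>z. f (snd z)" and G="\<lambda>z. g (snd z)" and p=p, OF cf _ cg])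
      (auto simp: nloop_bdry[OF f] nloop_bdry[OF g])
  then have "continuous_on ({0..1::real} \<times> ncube) (\<lambda>z. loop_concat f g (snd z))" by simp
  then have "continuous_on ncube (\<lambda>x. loop_concat f g (snd (0::real, x)))"
    by (rule continuous_on_compose2) (auto intro: continuous_intros)
  then have "continuous_on ncube (loop_concat f g)" by simp
  then show ?thesis unfolding nloop_def using concat_img[OF f g] concat_bdry[OF f g] by auto
qed

lemma concat_resp:
  fixes f f' g g' :: "real^'n::finite \<Rightarrow> 'a::metric_space"
  assumes "based_homotopic X p f f'" "based_homotopic X p g g'"
  shows "based_homotopic X p (loop_concat f g) (loop_concat f' g')"
proof -
  obtain K1 where K1: "continuous_on ({0..1::real} \<times> ncube) K1" "K1 ` ({0..1::real} \<times> ncube) \<subseteq> X"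
      "\<forall>x\<in>ncube. K1 (0,x) = f x \<and> K1 (1,x) = f' x" "\<forall>t\<in>{0..1}. \<forall>x\<in>nbdry. K1 (t,x) = p"
    using assms(1) unfolding based_homotopic_iff by blast
  obtain K2 where K2: "continuous_on ({0..1::real} \<times> ncube) K2" "K2 ` ({0..1::real} \<times> ncube) \<subseteq> X"
      "\<forall>x\<in>ncube. K2 (0,x) = g x \<and> K2 (1,x) = g' x" "\<forall>t\<in>{0..1}. \<forall>x\<in>nbdry. K2 (t,x) = p"
    using assms(2) unfolding based_homotopic_iff by blast
  let ?L = "\<lambda>z. loop_concat (\<lambda>y. K1 (fst z, y)) (\<lambda>y. K2 (fst z, y)) (snd z)"
  have "continuous_on ({0..1::real} \<times> ncube) ?L"
    by (rule concat_param[where p=p]) (use K1 K2 in auto)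
  moreover have "?L ` ({0..1::real} \<times> ncube) \<subseteq> X"
  proof clarify
    fix t :: real and x :: "real^'n" assume tx: "t \<in> {0..1}" "x \<in> ncube"
    show "?L (t,x) \<in> X"
      using K1(2) K2(2) tx concat_cube1[OF tx(2)] concat_cube2[OF tx(2)] by (auto simp: concat_alt)
  qed
  moreover have "\<forall>x\<in>ncube. ?L (0,x) = loop_concat f g x \<and> ?L (1,x) = loop_concat f' g' x"
    using K1(3) K2(3) by (auto intro: concat_cong)
  moreover have "\<forall>t\<in>{0..1}. \<forall>x\<in>nbdry. ?L (t,x) = p"
  proof (intro ballI)
    fix t :: real and x :: "real^'n" assume t: "t \<in> {0..1}" and x: "x \<in> nbdry"
    show "?L (t,x) = p"
    proof (cases "x $ coord0 \<le> 1/2")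
      case True
      then show ?thesis using K1(4) t concat_bdry1[OF x True] by (simp add: concat_alt)
    next
      case False
      then show ?thesis using K2(4) t concat_bdry2[OF x False] by (simp add: concat_alt)
    qed
  qed
  ultimately show ?thesis unfolding based_homotopic_iff by blast
qed


lemma concat_le0: "x $ coord0 \<le> 1/2 \<Longrightarrow> loop_concat f g x = f (Rv (2 * x $ coord0) x)"
  by (simp add: concat_alt)
lemma concat_gt0: "\<not> x $ coord0 \<le> 1/2 \<Longrightarrow> loop_concat f g x = g (Rv (2 * x $ coord0 - 1) x)"
  by (simp add: concat_alt)
lemma concat_le': "a \<le> 1/2 \<Longrightarrow> loop_concat f g (Rv a x) = f (Rv (2 * a) x)"
  by (simp add: concat_alt)
lemma concat_gt': "\<not> a \<le> 1/2 \<Longrightarrow> loop_concat f g (Rv a x) = g (Rv (2 * a - 1) x)"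
  by (simp add: concat_alt)
lemma Rv_arg: "a = b \<Longrightarrow> f (Rv a x) = f (Rv b x)"
  by simp

section \<open>Reparametrization\<close>

lemma comb01:
  fixes t a b :: real
  assumes "0 \<le> t" "t \<le> 1" "0 \<le> a" "a \<le> 1" "0 \<le> b" "b \<le> 1"
  shows "0 \<le> (1-t)*a + t*b \<and> (1-t)*a + t*b \<le> 1"
proof -
  have "(1-t)*a \<le> 1 - t" using assms by (intro mult_left_le) auto
  moreover have "t*b \<le> t" using assms by (intro mult_left_le) auto
  moreover have "0 \<le> (1-t)*a + t*b" using assms by (intro add_nonneg_nonneg mult_nonneg_nonneg) auto
  ultimately show ?thesis by linarith
qed

lemma reparam:
  fixes f :: "real^'n::finite \<Rightarrow> 'a::metric_space"
  assumes f: "nloop X p f"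
    and \<phi>: "continuous_on {0..1} \<phi>" "\<phi> ` {0..1} \<subseteq> {0..1}"
    and \<psi>: "continuous_on {0..1} \<psi>" "\<psi> ` {0..1} \<subseteq> {0..1}"
    and e0: "\<phi> 0 = \<psi> 0" "\<phi> 0 = 0 \<or> \<phi> 0 = 1" and e1: "\<phi> 1 = \<psi> 1" "\<phi> 1 = 0 \<or> \<phi> 1 = 1"
  shows "based_homotopic X p (\<lambda>x. f (Rv (\<phi> (x $ coord0)) x)) (\<lambda>x. f (Rv (\<psi> (x $ coord0)) x))"
proof -
  let ?A = "{0..1::real} \<times> (ncube :: (real^'n) set)"
  define a where "a z = (1 - fst z) * \<phi> (snd z $ coord0) + fst z * \<psi> (snd z $ coord0)" for z :: "real \<times> (real^'n)"
  define K where "K z = f (Rv (a z) (snd z))" for z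
  have s01: "snd z $ coord0 \<in> {0..1}" if "z \<in> ?A" for z using that by (auto simp: mem_ncube)
  have a01: "0 \<le> a z \<and> a z \<le> 1" if "z \<in> ?A" for z
  proof -
    have "\<phi> (snd z $ coord0) \<in> {0..1}" using \<phi>(2) s01[OF that] by blast
    moreover have "\<psi> (snd z $ coord0) \<in> {0..1}" using \<psi>(2) s01[OF that] by blast
    moreover have "fst z \<in> {0..1}" using that by auto
    ultimately show ?thesis unfolding a_def by (intro comb01) auto
  qed
  have cp: "continuous_on ?A (\<lambda>z. \<phi> (snd z $ coord0))"
    by (rule continuous_on_compose2[OF \<phi>(1)]) (auto intro!: continuous_intros continuous_on_component simp: mem_ncube)
  have cq: "continuous_on ?A (\<lambda>z. \<psi> (snd z $ coord0))"
    by (rule continuous_on_compose2[OF \<psi>(1)]) (auto intro!: continuous_intros continuous_on_component simp: mem_ncube)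
  have ca: "continuous_on ?A a"
    unfolding a_def by (intro continuous_intros cp cq)
  have inA: "Rv (a z) (snd z) \<in> ncube" if "z \<in> ?A" for z
    using that a01[OF that] by (intro Rv_ncube) auto
  have cK: "continuous_on ?A K"
    unfolding K_def
    by (rule continuous_on_compose2[OF nloop_cont[OF f]]) (auto intro!: cont_Rv ca continuous_intros inA)
  have KX: "K ` ?A \<subseteq> X" using nloop_img[OF f] inA unfolding K_def by auto
  have K0: "\<forall>x\<in>ncube. K (0,x) = f (Rv (\<phi> (x$coord0)) x) \<and> K (1,x) = f (Rv (\<psi> (x$coord0)) x)"
    by (simp add: K_def a_def)
  have Kb: "\<forall>t\<in>{0..1}. \<forall>x\<in>nbdry. K (t,x) = p"
  proof (intro ballI)
    fix t :: real and x :: "real^'n" assume t: "t \<in> {0..1}" and x: "x \<in> nbdry"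
    have xA: "(t,x) \<in> ?A" using t x nbdry_sub by auto
    have "Rv (a (t,x)) x \<in> nbdry"
    proof (rule Rv_nbdry[OF x])
      show "0 \<le> a (t,x)" "a (t,x) \<le> 1" using a01[OF xA] by auto
      assume "x $ coord0 = 0 \<or> x $ coord0 = 1"
      then show "a (t,x) = 0 \<or> a (t,x) = 1"
      proof
        assume "x $ coord0 = 0"
        then have "a (t,x) = \<phi> 0" using e0(1) by (simp add: a_def algebra_simps)
        then show ?thesis using e0(2) by simp
      next
        assume "x $ coord0 = 1"
        then have "a (t,x) = \<phi> 1" using e1(1) by (simp add: a_def algebra_simps)
        then show ?thesis using e1(2) by simp
      qed
    qed
    then show "K (t,x) = p" unfolding K_def using nloop_bdry[OF f] by simp
  qed
  show ?thesis unfolding based_homotopic_iff using cK KX K0 Kb by blast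
qed

lemma nloop_reparam:
  fixes f :: "real^'n::finite \<Rightarrow> 'a::metric_space"
  assumes f: "nloop X p f"
    and \<phi>: "continuous_on {0..1} \<phi>" "\<phi> ` {0..1} \<subseteq> {0..1}"
    and e: "\<phi> 0 = 0 \<or> \<phi> 0 = 1" "\<phi> 1 = 0 \<or> \<phi> 1 = 1"
  shows "nloop X p (\<lambda>x. f (Rv (\<phi> (x $ coord0)) x))"
  using bh_imp_nloop(1)[OF reparam[OF f \<phi> \<phi> refl e(1) refl e(2)]] .

section \<open>Group laws up to homotopy\<close>

lemma law_idr:
  fixes f :: "real^'n::finite \<Rightarrow> 'a::metric_space"
  assumes f: "nloop X p f"
  shows "based_homotopic X p (loop_concat f (\<lambda>x. p)) f"
proof -
  have "based_homotopic X p (\<lambda>x. f (Rv (min (2 * x $ coord0) 1) x)) (\<lambda>x. f (Rv (x $ coord0) x))"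
    by (rule reparam[OF f, where \<phi>="\<lambda>s. min (2 * s) 1" and \<psi>="\<lambda>s. s"])
      (auto intro!: continuous_intros)
  then show ?thesis
  proof (rule bh_cong)
    fix x :: "real^'n" assume x: "x \<in> ncube"
    show "loop_concat f (\<lambda>x. p) x = f (Rv (min (2 * x $ coord0) 1) x)"
    proof (cases "x $ coord0 \<le> 1/2")
      case True
      then have "min (2 * x$coord0) 1 = 2 * x$coord0" by simp
      then show ?thesis using True by (simp add: concat_le0)
    next
      case False
      then have "min (2 * x$coord0) 1 = 1" by simp
      moreover have "f (Rv 1 x) = p" using nloop_bdry[OF f Rv_nbdry_end[OF x]] by simp
      ultimately show ?thesis using False by (simp add: concat_gt0)
    qed
    show "f x = f (Rv (x $ coord0) x)" by simp
  qed
qed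

lemma law_idl:
  fixes f :: "real^'n::finite \<Rightarrow> 'a::metric_space"
  assumes f: "nloop X p f"
  shows "based_homotopic X p (loop_concat (\<lambda>x. p) f) f"
proof -
  have "based_homotopic X p (\<lambda>x. f (Rv (max (2 * x $ coord0 - 1) 0) x)) (\<lambda>x. f (Rv (x $ coord0) x))"
    by (rule reparam[OF f, where \<phi>="\<lambda>s. max (2 * s - 1) 0" and \<psi>="\<lambda>s. s"])
      (auto intro!: continuous_intros)
  then show ?thesis
  proof (rule bh_cong)
    fix x :: "real^'n" assume x: "x \<in> ncube"
    show "loop_concat (\<lambda>x. p) f x = f (Rv (max (2 * x $ coord0 - 1) 0) x)"
    proof (cases "x $ coord0 \<le> 1/2")
      case True
      then have "max (2 * x$coord0 - 1) 0 = 0" by simp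
      moreover have "f (Rv 0 x) = p" using nloop_bdry[OF f Rv_nbdry_end[OF x]] by simp
      ultimately show ?thesis using True by (simp add: concat_le0)
    next
      case False
      then have "max (2 * x$coord0 - 1) 0 = 2 * x$coord0 - 1" by simp
      then show ?thesis using False by (simp add: concat_gt0)
    qed
    show "f x = f (Rv (x $ coord0) x)" by simp
  qed
qed

definition loop_rev :: "(real^'n::finite \<Rightarrow> 'a) \<Rightarrow> real^'n \<Rightarrow> 'a" where
  "loop_rev f = (\<lambda>x. f (Rv (1 - x $ coord0) x))"

lemma nloop_rev:
  fixes f :: "real^'n::finite \<Rightarrow> 'a::metric_space"
  assumes f: "nloop X p f"
  shows "nloop X p (loop_rev f)"
  unfolding loop_rev_def
  by (rule nloop_reparam[OF f, where \<phi>="\<lambda>s. 1 - s"]) (auto intro!: continuous_intros)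

lemma Rv_rev_ncube: "x \<in> ncube \<Longrightarrow> Rv (1 - x $ coord0) x \<in> ncube"
  by (rule Rv_ncube) (auto simp: mem_ncube)

lemma rev_rev: "loop_rev (loop_rev f) = f"
  by (rule ext) (simp add: loop_rev_def)

lemma rev_const: "loop_rev (\<lambda>x. p) = (\<lambda>x. p)"
  by (simp add: loop_rev_def)

lemma rev_resp:
  fixes f g :: "real^'n::finite \<Rightarrow> 'a::metric_space"
  assumes "based_homotopic X p f g"
  shows "based_homotopic X p (loop_rev f) (loop_rev g)"
proof -
  obtain K where K: "continuous_on ({0..1::real} \<times> ncube) K" "K ` ({0..1::real} \<times> ncube) \<subseteq> X"
      "\<forall>x\<in>ncube. K (0,x) = f x \<and> K (1,x) = g x" "\<forall>t\<in>{0..1}. \<forall>x\<in>nbdry. K (t,x) = p"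
    using assms unfolding based_homotopic_iff by blast
  let ?A = "{0..1::real} \<times> (ncube :: (real^'n) set)"
  define L where "L z = K (fst z, Rv (1 - snd z $ coord0) (snd z))" for z :: "real \<times> (real^'n)"
  have inA: "(fst z, Rv (1 - snd z $ coord0) (snd z)) \<in> ?A" if "z \<in> ?A" for z
    using that by (auto simp: mem_ncube)
  have "continuous_on ?A L"
    unfolding L_def
    by (rule continuous_on_compose2[OF K(1)]) (auto intro!: continuous_intros cont_Rv continuous_on_component Rv_rev_ncube)
  moreover have "L ` ?A \<subseteq> X" using K(2) inA unfolding L_def by blast
  moreover have "\<forall>x\<in>ncube. L (0,x) = loop_rev f x \<and> L (1,x) = loop_rev g x"
  proof
    fix x :: "real^'n" assume "x \<in> ncube"
    then have "Rv (1 - x $ coord0) x \<in> ncube" by (auto simp: mem_ncube)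
    then show "L (0,x) = loop_rev f x \<and> L (1,x) = loop_rev g x"
      using K(3) by (simp add: L_def loop_rev_def)
  qed
  moreover have "\<forall>t\<in>{0..1}. \<forall>x\<in>nbdry. L (t,x) = p"
  proof (intro ballI)
    fix t :: real and x :: "real^'n" assume t: "t \<in> {0..1}" and x: "x \<in> nbdry"
    have "Rv (1 - x $ coord0) x \<in> nbdry"
      by (rule Rv_nbdry[OF x]) (use x in \<open>auto simp: mem_nbdry mem_ncube\<close>)
    then show "L (t,x) = p" using K(4) t by (simp add: L_def)
  qed
  ultimately show ?thesis unfolding based_homotopic_iff by blast
qed

lemma law_inv:
  fixes f :: "real^'n::finite \<Rightarrow> 'a::metric_space"
  assumes f: "nloop X p f"
  shows "based_homotopic X p (loop_concat f (loop_rev f)) (\<lambda>x. p)"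
proof -
  have "based_homotopic X p (\<lambda>x. f (Rv (min (2 * x $ coord0) (2 - 2 * x $ coord0)) x)) (\<lambda>x. f (Rv 0 x))"
  proof (rule reparam[OF f, where \<phi>="\<lambda>s. min (2 * s) (2 - 2 * s)" and \<psi>="\<lambda>s. 0"])
    show "continuous_on {0..1} (\<lambda>s::real. min (2 * s) (2 - 2 * s))" by (intro continuous_intros)
    show "(\<lambda>s::real. min (2 * s) (2 - 2 * s)) ` {0..1} \<subseteq> {0..1}"
    proof clarify
      fix s :: real assume "s \<in> {0..1}"
      then show "min (2 * s) (2 - 2 * s) \<in> {0..1}" by (simp add: min_def)
    qed
  qed auto
  then show ?thesis
  proof (rule bh_cong)
    fix x :: "real^'n" assume x: "x \<in> ncube"
    show "loop_concat f (loop_rev f) x = f (Rv (min (2 * x $ coord0) (2 - 2 * x $ coord0)) x)"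
    proof (cases "x $ coord0 \<le> 1/2")
      case True
      then have "min (2 * x$coord0) (2 - 2 * x $ coord0) = 2 * x$coord0" by simp
      then show ?thesis using True by (simp add: concat_le0)
    next
      case False
      then have "min (2 * x$coord0) (2 - 2 * x $ coord0) = 2 - 2 * x$coord0" by simp
      moreover have "loop_rev f (Rv (2 * x $ coord0 - 1) x) = f (Rv (2 - 2 * x$coord0) x)"
        unfolding loop_rev_def by simp
      ultimately show ?thesis using False by (simp add: concat_gt0)
    qed
    show "p = f (Rv 0 x)" using nloop_bdry[OF f Rv_nbdry_end[OF x]] by simp
  qed
qed

lemma law_assoc:
  fixes f g h :: "real^'n::finite \<Rightarrow> 'a::metric_space"
  assumes f: "nloop X p f" and g: "nloop X p g" and h: "nloop X p h"
  shows "based_homotopic X p (loop_concat (loop_concat f g) h) (loop_concat f (loop_concat g h))"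
proof -
  let ?W = "loop_concat f (loop_concat g h)"
  have W: "nloop X p ?W" using f g h by (intro nloop_concat)
  define \<phi> where "\<phi> s = min (min (2 * s) (s + 1/4)) (s/2 + 1/2)" for s :: real
  have "based_homotopic X p (\<lambda>x. ?W (Rv (\<phi> (x $ coord0)) x)) (\<lambda>x. ?W (Rv (x $ coord0) x))"
  proof (rule reparam[OF W])
    show "continuous_on {0..1} \<phi>" unfolding \<phi>_def by (intro continuous_intros) auto
    show "\<phi> ` {0..1} \<subseteq> {0..1}"
    proof clarify
      fix s :: real assume "s \<in> {0..1}"
      then show "\<phi> s \<in> {0..1}" unfolding \<phi>_def by (simp add: min_def)
    qed
    show "continuous_on {0..1} (\<lambda>s::real. s)" by (intro continuous_intros)
    show "(\<lambda>s::real. s) ` {0..1} \<subseteq> {0..1}" by simp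
    show "\<phi> 0 = 0" "\<phi> 0 = 0 \<or> \<phi> 0 = 1" "\<phi> 1 = 1" "\<phi> 1 = 0 \<or> \<phi> 1 = 1"
      by (simp_all add: \<phi>_def)
  qed
  then show ?thesis
  proof (rule bh_cong)
    fix x :: "real^'n" assume x: "x \<in> ncube"
    define s where "s = x $ coord0"
    show "loop_concat (loop_concat f g) h x = ?W (Rv (\<phi> (x $ coord0)) x)"
      unfolding s_def[symmetric]
    proof -
      consider "s \<le> 1/4" | "1/4 < s" "s \<le> 1/2" | "1/2 < s" by linarith
      then show "loop_concat (loop_concat f g) h x = ?W (Rv (\<phi> s) x)"
      proof cases
        case 1
        then have ph: "\<phi> s = 2 * s" by (simp add: \<phi>_def min_def)
        have "loop_concat (loop_concat f g) h x = f (Rv (2 * (2 * s)) x)"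
          using 1 by (simp add: concat_le0 concat_le' s_def)
        also have "\<dots> = ?W (Rv (\<phi> s) x)"
          using 1 by (simp add: ph concat_le')
        finally show ?thesis .
      next
        case 2
        then have ph: "\<phi> s = s + 1/4" by (simp add: \<phi>_def min_def)
        have "loop_concat (loop_concat f g) h x = g (Rv (2 * (2 * s) - 1) x)"
          using 2 by (simp add: concat_le0 concat_gt' s_def)
        also have "\<dots> = g (Rv (2 * (2 * (s + 1/4) - 1)) x)"
          by (rule Rv_arg) simp
        also have "\<dots> = ?W (Rv (\<phi> s) x)"
          using 2 by (simp add: ph concat_le' concat_gt')
        finally show ?thesis .
      next
        case 3
        then have ph: "\<phi> s = s/2 + 1/2" by (simp add: \<phi>_def min_def)
        have "loop_concat (loop_concat f g) h x = h (Rv (2 * s - 1) x)"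
          using 3 by (simp add: concat_gt0 s_def)
        also have "\<dots> = h (Rv (2 * (2 * (s/2 + 1/2) - 1) - 1) x)"
          by (rule Rv_arg) simp
        also have "\<dots> = ?W (Rv (\<phi> s) x)"
          using 3 by (simp add: ph concat_gt')
        finally show ?thesis .
      qed
    qed
    show "?W x = ?W (Rv (x $ coord0) x)" by simp
  qed
qed



section \<open>Group structure\<close>

lemma class_mult:
  fixes f g :: "real^'n::finite \<Rightarrow> 'a::metric_space"
  assumes f: "nloop X p f" and g: "nloop X p g"
  shows "loop_class X p f \<otimes>\<^bsub>pi_n X p\<^esub> loop_class X p g = loop_class X p (loop_concat f g)"
proof -
  define f' where "f' = (SOME f'. f' \<in> loop_class X p f)"
  define g' where "g' = (SOME g'. g' \<in> loop_class X p g)"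
  have "f' \<in> loop_class X p f" unfolding f'_def by (rule someI[of _ f]) (rule class_self[OF f])
  then have hf: "based_homotopic X p f f'" by (simp add: loop_class_def)
  have "g' \<in> loop_class X p g" unfolding g'_def by (rule someI[of _ g]) (rule class_self[OF g])
  then have hg: "based_homotopic X p g g'" by (simp add: loop_class_def)
  have "loop_class X p (loop_concat f g) = loop_class X p (loop_concat f' g')"
    by (rule class_eq[OF concat_resp[OF hf hg]])
  then show ?thesis by (simp add: pi_n_def f'_def[symmetric] g'_def[symmetric])
qed

lemma pi_one: "\<one>\<^bsub>pi_n X p\<^esub> = loop_class X p (\<lambda>x. p)"
  by (simp add: pi_n_def)

lemma pi_carrier: "carrier (pi_n X p) = pi_n_set X p"
  by (simp add: pi_n_def)

lemma carrier_ex: "a \<in> pi_n_set X p \<Longrightarrow> \<exists>f. nloop X p f \<and> a = loop_class X p f"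
  by (auto simp: pi_n_set_def)

lemma class_in: "nloop X p f \<Longrightarrow> loop_class X p f \<in> pi_n_set X p"
  by (auto simp: pi_n_set_def)

lemma cl_idr:
  fixes f :: "real^'n::finite \<Rightarrow> 'a::metric_space"
  assumes "p \<in> X" "nloop X p f"
  shows "loop_class X p f \<otimes>\<^bsub>pi_n X p\<^esub> \<one>\<^bsub>pi_n X p\<^esub> = loop_class X p f"
  unfolding pi_one class_mult[OF assms(2) nloop_const[OF assms(1)]]
  by (rule class_eq[OF law_idr[OF assms(2)]])

lemma cl_idl:
  fixes f :: "real^'n::finite \<Rightarrow> 'a::metric_space"
  assumes "p \<in> X" "nloop X p f"
  shows "\<one>\<^bsub>pi_n X p\<^esub> \<otimes>\<^bsub>pi_n X p\<^esub> loop_class X p f = loop_class X p f"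
  unfolding pi_one class_mult[OF nloop_const[OF assms(1)] assms(2)]
  by (rule class_eq[OF law_idl[OF assms(2)]])

lemma cl_assoc:
  fixes f g h :: "real^'n::finite \<Rightarrow> 'a::metric_space"
  assumes f: "nloop X p f" and g: "nloop X p g" and h: "nloop X p h"
  shows "(loop_class X p f \<otimes>\<^bsub>pi_n X p\<^esub> loop_class X p g) \<otimes>\<^bsub>pi_n X p\<^esub> loop_class X p h =
         loop_class X p f \<otimes>\<^bsub>pi_n X p\<^esub> (loop_class X p g \<otimes>\<^bsub>pi_n X p\<^esub> loop_class X p h)"
  unfolding class_mult[OF f g] class_mult[OF g h] class_mult[OF nloop_concat[OF f g] h]
    class_mult[OF f nloop_concat[OF g h]]
  by (rule class_eq[OF law_assoc[OF f g h]])

lemma cl_inv: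
  fixes f :: "real^'n::finite \<Rightarrow> 'a::metric_space"
  assumes "nloop X p f"
  shows "loop_class X p f \<otimes>\<^bsub>pi_n X p\<^esub> loop_class X p (loop_rev f) = \<one>\<^bsub>pi_n X p\<^esub>"
  unfolding pi_one class_mult[OF assms nloop_rev[OF assms]]
  by (rule class_eq[OF law_inv[OF assms]])

lemma cl_inv2:
  fixes f :: "real^'n::finite \<Rightarrow> 'a::metric_space"
  assumes "nloop X p f"
  shows "loop_class X p (loop_rev f) \<otimes>\<^bsub>pi_n X p\<^esub> loop_class X p f = \<one>\<^bsub>pi_n X p\<^esub>"
  using cl_inv[OF nloop_rev[OF assms]] by (simp add: rev_rev)

lemma inv_class:
  fixes f :: "real^'n::finite \<Rightarrow> 'a::metric_space"
  assumes p: "p \<in> X" and f: "nloop X p f"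
  shows "inv\<^bsub>pi_n X p\<^esub> (loop_class X p f) = loop_class X p (loop_rev f)"
  unfolding m_inv_def
proof (rule the_equality)
  show "loop_class X p (loop_rev f) \<in> carrier (pi_n X p) \<and>
    loop_class X p f \<otimes>\<^bsub>pi_n X p\<^esub> loop_class X p (loop_rev f) = \<one>\<^bsub>pi_n X p\<^esub> \<and>
    loop_class X p (loop_rev f) \<otimes>\<^bsub>pi_n X p\<^esub> loop_class X p f = \<one>\<^bsub>pi_n X p\<^esub>"
    using cl_inv[OF f] cl_inv2[OF f] class_in[OF nloop_rev[OF f]] by (simp add: pi_carrier)
next
  fix y assume y: "y \<in> carrier (pi_n X p) \<and> loop_class X p f \<otimes>\<^bsub>pi_n X p\<^esub> y = \<one>\<^bsub>pi_n X p\<^esub> \<and>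
    y \<otimes>\<^bsub>pi_n X p\<^esub> loop_class X p f = \<one>\<^bsub>pi_n X p\<^esub>"
  then have "y \<in> pi_n_set X p" by (simp add: pi_carrier)
  then obtain k where k: "nloop X p k" "y = loop_class X p k"
    using carrier_ex by blast
  have "y = y \<otimes>\<^bsub>pi_n X p\<^esub> \<one>\<^bsub>pi_n X p\<^esub>" using cl_idr[OF p k(1)] k(2) by simp
  also have "\<dots> = y \<otimes>\<^bsub>pi_n X p\<^esub> (loop_class X p f \<otimes>\<^bsub>pi_n X p\<^esub> loop_class X p (loop_rev f))"
    using cl_inv[OF f] by simp
  also have "\<dots> = (y \<otimes>\<^bsub>pi_n X p\<^esub> loop_class X p f) \<otimes>\<^bsub>pi_n X p\<^esub> loop_class X p (loop_rev f)"
    using cl_assoc[OF k(1) f nloop_rev[OF f]] k(2) by simp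
  also have "\<dots> = \<one>\<^bsub>pi_n X p\<^esub> \<otimes>\<^bsub>pi_n X p\<^esub> loop_class X p (loop_rev f)" using y by simp
  also have "\<dots> = loop_class X p (loop_rev f)" by (rule cl_idl[OF p nloop_rev[OF f]])
  finally show "y = loop_class X p (loop_rev f)" .
qed

section \<open>Uniform distance\<close>

lemma mu_upper:
  fixes \<alpha> \<beta> :: "real^'n::finite \<Rightarrow> 'a::metric_space"
  assumes "continuous_on ncube \<alpha>" "continuous_on ncube \<beta>" "x \<in> ncube"
  shows "dist (\<alpha> x) (\<beta> x) \<le> loop_mu \<alpha> \<beta>"
  unfolding loop_mu_def
proof (rule cSUP_upper[OF assms(3)])
  have "compact ((\<lambda>t. dist (\<alpha> t) (\<beta> t)) ` ncube)"
    by (intro compact_continuous_image continuous_on_dist assms(1,2) compact_ncube)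
  then show "bdd_above ((\<lambda>t. dist (\<alpha> t) (\<beta> t)) ` ncube)"
    by (intro bounded_imp_bdd_above compact_imp_bounded)
qed

lemma mu_le:
  fixes \<alpha> \<beta> :: "real^'n::finite \<Rightarrow> 'a::metric_space"
  assumes "\<And>x. x \<in> ncube \<Longrightarrow> dist (\<alpha> x) (\<beta> x) \<le> c"
  shows "loop_mu \<alpha> \<beta> \<le> c"
  unfolding loop_mu_def by (rule cSUP_least[OF ncube_ne]) (rule assms)

lemma mu_nonneg:
  fixes \<alpha> \<beta> :: "real^'n::finite \<Rightarrow> 'a::metric_space"
  assumes "continuous_on ncube \<alpha>" "continuous_on ncube \<beta>"
  shows "0 \<le> loop_mu \<alpha> \<beta>"
  using mu_upper[OF assms zero_ncube] zero_le_dist order_trans by blast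

lemma rho_le:
  fixes \<alpha> \<beta> :: "real^'n::finite \<Rightarrow> 'a::metric_space"
  assumes a: "\<And>\<alpha>. \<alpha> \<in> a \<Longrightarrow> nloop X p \<alpha>" and b: "\<And>\<beta>. \<beta> \<in> b \<Longrightarrow> nloop X p \<beta>"
    and "\<alpha> \<in> a" "\<beta> \<in> b"
  shows "loop_rho a b \<le> loop_mu \<alpha> \<beta>"
proof -
  have "bdd_below ((\<lambda>(\<alpha>, \<beta>). loop_mu \<alpha> \<beta>) ` (a \<times> b))"
  proof (rule bdd_belowI[of _ 0])
    fix m assume "m \<in> (\<lambda>(\<alpha>, \<beta>). loop_mu \<alpha> \<beta>) ` (a \<times> b)"
    then obtain \<alpha>' \<beta>' where "\<alpha>' \<in> a" "\<beta>' \<in> b" "m = loop_mu \<alpha>' \<beta>'" by auto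
    then show "0 \<le> m" using mu_nonneg nloop_cont a b by metis
  qed
  then have "Inf ((\<lambda>(\<alpha>, \<beta>). loop_mu \<alpha> \<beta>) ` (a \<times> b)) \<le> (\<lambda>(\<alpha>, \<beta>). loop_mu \<alpha> \<beta>) (\<alpha>, \<beta>)"
    by (rule cINF_lower) (use assms in auto)
  then show ?thesis by (simp add: loop_rho_def)
qed

definition goodcls :: "'a::metric_space set \<Rightarrow> 'a \<Rightarrow> real \<Rightarrow> (real^'n::finite \<Rightarrow> 'a) set \<Rightarrow> bool" where
  "goodcls X p c a \<longleftrightarrow> a \<in> pi_n_set X p \<and> (\<exists>\<alpha>\<in>a. \<exists>\<beta>\<in>loop_class X p (\<lambda>x. p). loop_mu \<alpha> \<beta> \<le> c)"

lemma good_one: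
  assumes "p \<in> X" "0 \<le> c"
  shows "goodcls X p c (loop_class X p (\<lambda>x::real^'n::finite. p))"
proof -
  have n: "nloop X p (\<lambda>x::real^'n. p)" by (rule nloop_const[OF assms(1)])
  have "loop_mu (\<lambda>x::real^'n. p) (\<lambda>x. p) \<le> c" by (rule mu_le) (simp add: assms)
  then show ?thesis unfolding goodcls_def using class_in[OF n] class_self[OF n] by blast
qed

lemma concat_const: "loop_concat (\<lambda>x. p) (\<lambda>x. p) = (\<lambda>x. p)"
  by (rule ext) (simp add: concat_alt)

lemma good_rep:
  assumes "goodcls X p c a"
  obtains \<alpha> \<beta> where "nloop X p \<alpha>" "a = loop_class X p \<alpha>" "nloop X p \<beta>"
    "based_homotopic X p (\<lambda>x. p) \<beta>" "loop_mu \<alpha> \<beta> \<le> c"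
proof -
  obtain \<alpha> \<beta> where ab: "\<alpha> \<in> a" "\<beta> \<in> loop_class X p (\<lambda>x. p)" "loop_mu \<alpha> \<beta> \<le> c"
    and a: "a \<in> pi_n_set X p" using assms unfolding goodcls_def by blast
  obtain f where f: "nloop X p f" "a = loop_class X p f" using carrier_ex[OF a] by blast
  have "loop_class X p \<alpha> = a" using class_mem[of \<alpha> X p f] ab(1) f(2) by simp
  moreover have "nloop X p \<alpha>" using ab(1) f(2) class_nloop by blast
  moreover have "nloop X p \<beta>" "based_homotopic X p (\<lambda>x. p) \<beta>" using ab(2) by (auto simp: loop_class_def)
  ultimately show ?thesis using that ab(3) by metis
qed

lemma good_mult:
  fixes a b :: "(real^'n::finite \<Rightarrow> 'a::metric_space) set"
  assumes p: "p \<in> X" and ga: "goodcls X p c a" and gb: "goodcls X p c b"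
  shows "goodcls X p c (a \<otimes>\<^bsub>pi_n X p\<^esub> b)"
proof -
  obtain \<alpha>1 \<beta>1 where 1: "nloop X p \<alpha>1" "a = loop_class X p \<alpha>1" "nloop X p \<beta>1"
    "based_homotopic X p (\<lambda>x. p) \<beta>1" "loop_mu \<alpha>1 \<beta>1 \<le> c" using good_rep[OF ga] by blast
  obtain \<alpha>2 \<beta>2 where 2: "nloop X p \<alpha>2" "b = loop_class X p \<alpha>2" "nloop X p \<beta>2"
    "based_homotopic X p (\<lambda>x. p) \<beta>2" "loop_mu \<alpha>2 \<beta>2 \<le> c" using good_rep[OF gb] by blast
  have ab: "a \<otimes>\<^bsub>pi_n X p\<^esub> b = loop_class X p (loop_concat \<alpha>1 \<alpha>2)"
    using class_mult[OF 1(1) 2(1)] 1(2) 2(2) by simp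
  have na: "nloop X p (loop_concat \<alpha>1 \<alpha>2)" by (rule nloop_concat[OF 1(1) 2(1)])
  have nb: "nloop X p (loop_concat \<beta>1 \<beta>2)" by (rule nloop_concat[OF 1(3) 2(3)])
  have "based_homotopic X p (loop_concat (\<lambda>x. p) (\<lambda>x. p)) (loop_concat \<beta>1 \<beta>2)"
    by (rule concat_resp[OF 1(4) 2(4)])
  then have hb: "based_homotopic X p (\<lambda>x. p) (loop_concat \<beta>1 \<beta>2)" by (simp add: concat_const)
  have "loop_mu (loop_concat \<alpha>1 \<alpha>2) (loop_concat \<beta>1 \<beta>2) \<le> c"
  proof (rule mu_le)
    fix x :: "real^'n" assume x: "x \<in> ncube"
    show "dist (loop_concat \<alpha>1 \<alpha>2 x) (loop_concat \<beta>1 \<beta>2 x) \<le> c"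
    proof (cases "x $ coord0 \<le> 1/2")
      case True
      have "dist (\<alpha>1 (Rv (2 * x $ coord0) x)) (\<beta>1 (Rv (2 * x $ coord0) x)) \<le> loop_mu \<alpha>1 \<beta>1"
        by (rule mu_upper[OF nloop_cont[OF 1(1)] nloop_cont[OF 1(3)] concat_cube1[OF x True]])
      then show ?thesis using True 1(5) by (simp add: concat_le0)
    next
      case False
      have "dist (\<alpha>2 (Rv (2 * x $ coord0 - 1) x)) (\<beta>2 (Rv (2 * x $ coord0 - 1) x)) \<le> loop_mu \<alpha>2 \<beta>2"
        by (rule mu_upper[OF nloop_cont[OF 2(1)] nloop_cont[OF 2(3)] concat_cube2[OF x False]])
      then show ?thesis using False 2(5) by (simp add: concat_gt0)
    qed
  qed
  moreover have "loop_concat \<alpha>1 \<alpha>2 \<in> loop_class X p (loop_concat \<alpha>1 \<alpha>2)" by (rule class_self[OF na])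
  moreover have "loop_concat \<beta>1 \<beta>2 \<in> loop_class X p (\<lambda>x. p)" using nb hb by (simp add: loop_class_def)
  ultimately show ?thesis unfolding goodcls_def ab using class_in[OF na] by blast
qed

lemma good_inv:
  fixes a :: "(real^'n::finite \<Rightarrow> 'a::metric_space) set"
  assumes p: "p \<in> X" and ga: "goodcls X p c a"
  shows "goodcls X p c (inv\<^bsub>pi_n X p\<^esub> a)"
proof -
  obtain \<alpha> \<beta> where 1: "nloop X p \<alpha>" "a = loop_class X p \<alpha>" "nloop X p \<beta>"
    "based_homotopic X p (\<lambda>x. p) \<beta>" "loop_mu \<alpha> \<beta> \<le> c" using good_rep[OF ga] by blast
  have ia: "inv\<^bsub>pi_n X p\<^esub> a = loop_class X p (loop_rev \<alpha>)" using inv_class[OF p 1(1)] 1(2) by simp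
  have na: "nloop X p (loop_rev \<alpha>)" by (rule nloop_rev[OF 1(1)])
  have nb: "nloop X p (loop_rev \<beta>)" by (rule nloop_rev[OF 1(3)])
  have "based_homotopic X p (loop_rev (\<lambda>x. p)) (loop_rev \<beta>)" by (rule rev_resp[OF 1(4)])
  then have hb: "based_homotopic X p (\<lambda>x. p) (loop_rev \<beta>)" by (simp add: rev_const)
  have "loop_mu (loop_rev \<alpha>) (loop_rev \<beta>) \<le> c"
  proof (rule mu_le)
    fix x :: "real^'n" assume x: "x \<in> ncube"
    have "dist (\<alpha> (Rv (1 - x $ coord0) x)) (\<beta> (Rv (1 - x $ coord0) x)) \<le> loop_mu \<alpha> \<beta>"
      by (rule mu_upper[OF nloop_cont[OF 1(1)] nloop_cont[OF 1(3)] Rv_rev_ncube[OF x]])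
    then show "dist (loop_rev \<alpha> x) (loop_rev \<beta> x) \<le> c" using 1(5) by (simp add: loop_rev_def)
  qed
  moreover have "loop_rev \<alpha> \<in> loop_class X p (loop_rev \<alpha>)" by (rule class_self[OF na])
  moreover have "loop_rev \<beta> \<in> loop_class X p (\<lambda>x. p)" using nb hb by (simp add: loop_class_def)
  ultimately show ?thesis unfolding goodcls_def ia using class_in[OF na] by blast
qed


section \<open>Radial construction\<close>

definition mx :: "real^'n::finite \<Rightarrow> real" where
  "mx x = Max (range (\<lambda>j. \<bar>x $ j - 1/2\<bar>))"

lemma mx_ge: "\<bar>x $ j - 1/2\<bar> \<le> mx x"
  unfolding mx_def by (rule Max_ge) auto

lemma mx_le_iff: "mx x \<le> a \<longleftrightarrow> (\<forall>j. \<bar>x $ j - 1/2\<bar> \<le> a)"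
  unfolding mx_def by (subst Max_le_iff) auto

lemma mx_att: "\<exists>j. mx x = \<bar>x $ j - 1/2\<bar>"
proof -
  have "mx x \<in> range (\<lambda>j. \<bar>x $ j - 1/2\<bar>)" unfolding mx_def by (rule Max_in) auto
  then show ?thesis by auto
qed

lemma mx_nonneg: "0 \<le> mx x"
  using mx_ge[of x] abs_ge_zero order_trans by blast

lemma mx_lip: "mx x \<le> mx y + dist x y"
  unfolding mx_le_iff
proof
  fix j
  have "\<bar>x $ j - 1/2\<bar> \<le> \<bar>x $ j - y $ j\<bar> + \<bar>y $ j - 1/2\<bar>"
    using abs_triangle_ineq[of "x $ j - y $ j" "y $ j - 1/2"] by simp
  moreover have "\<bar>x $ j - y $ j\<bar> \<le> dist x y"
    using component_le_norm_cart[of "x - y" j] by (simp add: dist_norm)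
  moreover have "\<bar>y $ j - 1/2\<bar> \<le> mx y" by (rule mx_ge)
  ultimately show "\<bar>x $ j - 1/2\<bar> \<le> mx y + dist x y" by linarith
qed

lemma cont_mx: "continuous_on S mx"
  unfolding continuous_on_iff
proof (intro ballI allI impI)
  fix x e assume "x \<in> S" and e: "(0::real) < e"
  show "\<exists>d>0. \<forall>x'\<in>S. dist x' x < d \<longrightarrow> dist (mx x') (mx x) < e"
  proof (intro exI[of _ e] conjI ballI impI)
    fix x' assume "dist x' x < e"
    moreover have "mx x' \<le> mx x + dist x' x" by (rule mx_lip)
    moreover have "mx x \<le> mx x' + dist x x'" by (rule mx_lip)
    ultimately show "dist (mx x') (mx x) < e" by (simp add: dist_real_def dist_commute abs_less_iff)
  qed (use e in simp)
qed

lemma mx_cube: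
  assumes "x \<in> ncube" shows "mx x \<le> 1/2"
  unfolding mx_le_iff
proof
  fix j
  have "0 \<le> x $ j" "x $ j \<le> 1" using assms by (auto simp: mem_ncube)
  then have "x $ j - 1/2 \<le> 1/2" "- (x $ j - 1/2) \<le> 1/2" by linarith+
  then show "\<bar>x $ j - 1/2\<bar> \<le> 1/2" by (rule abs_leI)
qed

lemma mx_bdry: "x \<in> nbdry \<Longrightarrow> mx x = 1/2"
proof -
  assume x: "x \<in> nbdry"
  then obtain j where j: "x $ j = 0 \<or> x $ j = 1" by (auto simp: mem_nbdry)
  have "\<bar>x $ j - 1/2\<bar> \<le> mx x" by (rule mx_ge)
  then have "1/2 \<le> mx x" using j by auto
  moreover have "mx x \<le> 1/2" using x nbdry_sub mx_cube by blast
  ultimately show ?thesis by simp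
qed

definition dv :: "real^'n::finite \<Rightarrow> real" where "dv x = max (1/2) (2 * mx x)"
definition yv :: "real^'n::finite \<Rightarrow> real^'n" where "yv x = (\<chi> j. 1/2 + (x $ j - 1/2) / dv x)"
definition tv :: "real^'n::finite \<Rightarrow> real" where "tv x = min 1 (2 - 4 * mx x)"

lemma dv_pos: "dv x > 0"
  by (simp add: dv_def)

lemma dv_ne: "dv x \<noteq> 0"
  using dv_pos[of x] by simp

lemma cont_tv: "continuous_on S tv"
  unfolding tv_def by (intro continuous_intros cont_mx)

lemma cont_dv: "continuous_on S dv"
  unfolding dv_def by (intro continuous_intros cont_mx)

lemma cont_yv: "continuous_on S yv"
  unfolding yv_def
proof (rule continuous_on_vec_lambda)
  fix j
  show "continuous_on S (\<lambda>x. 1/2 + (x $ j - 1/2) / dv x)"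
    by (intro continuous_intros cont_dv continuous_on_component) (simp add: dv_ne)
qed

lemma cont_tv_snd: "continuous_on S (\<lambda>z. tv (snd z))"
  by (rule continuous_on_compose2[OF cont_tv[of UNIV]]) (auto intro: continuous_intros)

lemma cont_yv_snd: "continuous_on S (\<lambda>z. yv (snd z))"
  by (rule continuous_on_compose2[OF cont_yv[of UNIV]]) (auto intro: continuous_intros)

lemma tv01: "x \<in> ncube \<Longrightarrow> 0 \<le> tv x \<and> tv x \<le> 1"
  using mx_cube[of x] by (auto simp: tv_def)

lemma tv_near: "mx x < 1/4 \<Longrightarrow> tv x = 1"
  by (simp add: tv_def)

lemma yv_cube:
  assumes x: "x \<in> ncube"
  shows "yv x \<in> ncube"
  unfolding mem_ncube
proof
  fix j
  have "\<bar>x $ j - 1/2\<bar> \<le> mx x" by (rule mx_ge)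
  also have "\<dots> \<le> 1/2 * dv x" by (simp add: dv_def)
  finally have "\<bar>x $ j - 1/2\<bar> / dv x \<le> 1/2" using dv_pos[of x] by (simp add: pos_divide_le_eq)
  define q where "q = (x $ j - 1/2) / dv x"
  have "\<bar>q\<bar> \<le> 1/2" unfolding q_def using dv_pos[of x] \<open>\<bar>x $ j - 1/2\<bar> / dv x \<le> 1/2\<close> by (simp add: abs_divide)
  then have "q \<le> 1/2" "- q \<le> 1/2" by (auto dest: abs_le_D1 abs_le_D2)
  moreover have "yv x $ j = 1/2 + q" by (simp add: yv_def q_def)
  ultimately show "0 \<le> yv x $ j \<and> yv x $ j \<le> 1" by linarith
qed

lemma yv_bdry_far:
  assumes x: "x \<in> ncube" and m: "1/4 \<le> mx x"
  shows "yv x \<in> nbdry"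
proof -
  have d: "dv x = 2 * mx x" using m by (simp add: dv_def)
  have mp: "mx x > 0" using m by simp
  obtain j where j: "mx x = \<bar>x $ j - 1/2\<bar>" using mx_att by blast
  define q where "q = (x $ j - 1/2) / dv x"
  have "q = 1/2 \<or> q = - 1/2"
  proof (cases "0 \<le> x $ j - 1/2")
    case True
    then have "x $ j - 1/2 = mx x" using j by simp
    then have "q = mx x / (2 * mx x)" unfolding q_def d by simp
    then show ?thesis using mp by simp
  next
    case False
    then have "x $ j - 1/2 = - mx x" using j by simp
    then have "q = - mx x / (2 * mx x)" unfolding q_def d by simp
    then show ?thesis using mp by simp
  qed
  moreover have "yv x $ j = 1/2 + q" by (simp add: yv_def q_def)
  ultimately have "yv x $ j = 0 \<or> yv x $ j = 1" by auto
  then show ?thesis unfolding mem_nbdry using yv_cube[OF x] by blast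
qed

lemma bdry_vals:
  assumes "x \<in> nbdry"
  shows "tv x = 0" "yv x = x"
proof -
  have m: "mx x = 1/2" by (rule mx_bdry[OF assms])
  then show "tv x = 0" by (simp add: tv_def)
  have "dv x = 1" using m by (simp add: dv_def)
  then show "yv x = x" by (simp add: yv_def vec_eq_iff)
qed

lemma convex_ncube: "convex ncube"
  by (simp add: ncube_def convex_box)

lemma gen_good:
  fixes g f :: "real^'n::finite \<Rightarrow> 'a::metric_space" and \<gamma> :: "real \<Rightarrow> 'a"
  assumes p: "p \<in> X" and \<gamma>: "path \<gamma>" "path_image \<gamma> \<subseteq> X" "pathstart \<gamma> = p"
    and f: "nloop X (pathfinish \<gamma>) f" and fU: "f ` ncube \<subseteq> U" and g: "nloop X p g"
    and pc: "path_conjugate X \<gamma> f g" and U: "\<And>u v. u \<in> U \<Longrightarrow> v \<in> U \<Longrightarrow> dist u v \<le> c"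
    and c: "0 \<le> c"
  shows "goodcls X p c (loop_class X p g)"
proof -
  obtain H where H: "continuous_on ({0..1::real} \<times> ncube) H" "H ` ({0..1::real} \<times> ncube) \<subseteq> X"
     "\<forall>x\<in>ncube. H (0, x) = g x \<and> H (1, x) = f x" "\<forall>t\<in>{0..1}. \<forall>x\<in>nbdry. H (t, x) = \<gamma> t"
    using pc unfolding path_conjugate_def by blast
  have \<gamma>c: "continuous_on {0..1} \<gamma>" using \<gamma>(1) by (simp add: path_def)
  have \<gamma>0: "\<gamma> 0 = p" using \<gamma>(3) by (simp add: pathstart_def)
  have \<gamma>X: "\<gamma> t \<in> X" if "t \<in> {0..1}" for t using \<gamma>(2) that by (auto simp: path_image_def)
  define \<alpha> where "\<alpha> x = H (tv x, yv x)" for x :: "real^'n"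
  define \<beta> where "\<beta> x = \<gamma> (tv x)" for x :: "real^'n"
  have \<sigma>A: "(tv x, yv x) \<in> {0..1} \<times> ncube" if "x \<in> ncube" for x using tv01[OF that] yv_cube[OF that] by auto
  have HX: "H z \<in> X" if "z \<in> {0..1} \<times> ncube" for z using H(2) that by blast
  have c\<alpha>: "continuous_on ncube \<alpha>" unfolding \<alpha>_def
    by (rule continuous_on_compose2[OF H(1)]) (use \<sigma>A in \<open>auto intro!: continuous_intros cont_tv cont_yv\<close>)
  have n\<alpha>: "nloop X p \<alpha>"
    unfolding nloop_def
  proof (intro conjI ballI c\<alpha>)
    show "\<alpha> ` ncube \<subseteq> X"
    proof
      fix y assume "y \<in> \<alpha> ` ncube"
      then obtain x where x: "x \<in> ncube" "y = \<alpha> x" by auto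
      then show "y \<in> X" using HX[OF \<sigma>A[OF x(1)]] by (simp add: \<alpha>_def)
    qed
    fix x :: "real^'n" assume x: "x \<in> nbdry"
    then show "\<alpha> x = p" using H(4) bdry_vals[OF x] \<gamma>0 by (simp add: \<alpha>_def)
  qed
  have tvI: "tv x \<in> {0..1}" if "x \<in> ncube" for x :: "real^'n" using tv01[OF that] by auto
  have c\<beta>: "continuous_on ncube \<beta>" unfolding \<beta>_def
    by (rule continuous_on_compose2[OF \<gamma>c]) (use tvI in \<open>auto intro!: cont_tv\<close>)
  have n\<beta>: "nloop X p \<beta>"
    unfolding nloop_def
  proof (intro conjI ballI c\<beta>)
    show "\<beta> ` ncube \<subseteq> X" using \<gamma>X tvI by (auto simp: \<beta>_def)
    fix x :: "real^'n" assume x: "x \<in> nbdry"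
    then show "\<beta> x = p" using bdry_vals[OF x] \<gamma>0 by (simp add: \<beta>_def)
  qed
  have hg\<alpha>: "based_homotopic X p g \<alpha>"
    unfolding based_homotopic_iff
  proof (intro exI conjI)
    let ?K = "\<lambda>z::real \<times> (real^'n). H (fst z * tv (snd z), fst z *\<^sub>R yv (snd z) + (1 - fst z) *\<^sub>R snd z)"
    have inA: "(fst z * tv (snd z), fst z *\<^sub>R yv (snd z) + (1 - fst z) *\<^sub>R snd z) \<in> {0..1} \<times> ncube"
      if "z \<in> {0..1::real} \<times> ncube" for z :: "real \<times> (real^'n)"
    proof -
      have z: "0 \<le> fst z" "fst z \<le> 1" "snd z \<in> ncube" using that by auto
      have "0 \<le> fst z * tv (snd z)" "fst z * tv (snd z) \<le> 1"
        using z tv01[OF z(3)] by (auto intro: mult_nonneg_nonneg mult_le_one)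
      moreover have "fst z *\<^sub>R yv (snd z) + (1 - fst z) *\<^sub>R snd z \<in> ncube"
        by (rule convexD[OF convex_ncube yv_cube[OF z(3)] z(3)]) (use z in auto)
      ultimately show ?thesis by auto
    qed
    show "continuous_on ({0..1} \<times> ncube) ?K"
      by (rule continuous_on_compose2[OF H(1)]) (use inA in \<open>auto intro!: continuous_intros cont_tv_snd cont_yv_snd\<close>)
    show "?K ` ({0..1} \<times> ncube) \<subseteq> X"
    proof (rule image_subsetI)
      fix z :: "real \<times> (real^'n)" assume z: "z \<in> {0..1} \<times> ncube"
      show "?K z \<in> X" using HX[OF inA[OF z]] by simp
    qed
    show "\<forall>x\<in>ncube. ?K (0, x) = g x \<and> ?K (1, x) = \<alpha> x" using H(3) by (simp add: \<alpha>_def)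
    show "\<forall>t\<in>{0..1}. \<forall>x\<in>nbdry. ?K (t, x) = p"
    proof (intro ballI)
      fix t :: real and x :: "real^'n" assume t: "t \<in> {0..1}" and x: "x \<in> nbdry"
      have "t *\<^sub>R x + (1 - t) *\<^sub>R x = (t + (1 - t)) *\<^sub>R x" by (rule scaleR_left_distrib[symmetric])
      then have e: "t *\<^sub>R x + (1 - t) *\<^sub>R x = x" by simp
      show "?K (t, x) = p" using bdry_vals[OF x] e H(4) x \<gamma>0 by simp
    qed
  qed
  have hc\<beta>: "based_homotopic X p (\<lambda>x. p) \<beta>"
    unfolding based_homotopic_iff
  proof (intro exI conjI)
    let ?K = "\<lambda>z::real \<times> (real^'n). \<gamma> (fst z * tv (snd z))"
    have inI: "fst z * tv (snd z) \<in> {0..1}" if "z \<in> {0..1::real} \<times> ncube" for z :: "real \<times> (real^'n)"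
    proof -
      have z: "0 \<le> fst z" "fst z \<le> 1" "snd z \<in> ncube" using that by auto
      show ?thesis using z tv01[OF z(3)] by (auto intro: mult_nonneg_nonneg mult_le_one)
    qed
    show "continuous_on ({0..1} \<times> ncube) ?K"
      by (rule continuous_on_compose2[OF \<gamma>c]) (use inI in \<open>auto intro!: continuous_intros cont_tv_snd\<close>)
    show "?K ` ({0..1} \<times> ncube) \<subseteq> X" using \<gamma>X inI by auto
    show "\<forall>x\<in>ncube. ?K (0, x) = p \<and> ?K (1, x) = \<beta> x" using \<gamma>0 by (simp add: \<beta>_def)
    show "\<forall>t\<in>{0..1}. \<forall>x\<in>nbdry. ?K (t, x) = p"
    proof (intro ballI)
      fix t :: real and x :: "real^'n" assume "t \<in> {0..1}" "x \<in> nbdry"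
      then show "?K (t, x) = p" using bdry_vals(1)[of x] \<gamma>0 by simp
    qed
  qed
  have mu: "loop_mu \<alpha> \<beta> \<le> c"
  proof (rule mu_le)
    fix x :: "real^'n" assume x: "x \<in> ncube"
    show "dist (\<alpha> x) (\<beta> x) \<le> c"
    proof (cases "1/4 \<le> mx x")
      case True
      then have "yv x \<in> nbdry" by (rule yv_bdry_far[OF x])
      then have "\<alpha> x = \<beta> x" using H(4) tv01[OF x] by (simp add: \<alpha>_def \<beta>_def)
      then show ?thesis using c by simp
    next
      case False
      then have t1: "tv x = 1" by (intro tv_near) simp
      have "\<alpha> x = f (yv x)" using H(3) yv_cube[OF x] t1 by (simp add: \<alpha>_def)
      moreover have "\<beta> x = f 0" using t1 nloop_bdry[OF f zero_nbdry] by (simp add: \<beta>_def pathfinish_def)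
      moreover have "f (yv x) \<in> U" "f 0 \<in> U" using fU yv_cube[OF x] zero_ncube by auto
      ultimately show ?thesis using U by simp
    qed
  qed
  have "loop_class X p g = loop_class X p \<alpha>" by (rule class_eq[OF hg\<alpha>])
  then have "\<alpha> \<in> loop_class X p g" using class_self[OF n\<alpha>] by simp
  moreover have "\<beta> \<in> loop_class X p (\<lambda>x. p)" using n\<beta> hc\<beta> by (simp add: loop_class_def)
  ultimately show ?thesis unfolding goodcls_def using class_in[OF g] mu by blast
qed

theorem proposition5p11:
  fixes X :: "'a::metric_space set" and x0 :: 'a and r :: real
  assumes "path_connected X" and "x0 \<in> X" and "r > 0"
  shows "\<exists>(\<U>, U0) \<in> cov X x0.
           (spanier_group X \<U> x0 :: (real^'n::finite \<Rightarrow> 'a) set set) \<subseteq> rho_ball X x0 r"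
proof -
  define \<rho> where "\<rho> = r / 4"
  have \<rho>: "\<rho> > 0" using assms(3) by (simp add: \<rho>_def)
  obtain \<W> :: "'a set set" where W: "\<forall>W\<in>\<W>. open W \<and> (\<exists>s. W \<subseteq> ball s \<rho>)" "\<Union>\<W> = UNIV"
      "\<forall>x. \<exists>V. open V \<and> x \<in> V \<and> finite {W\<in>\<W>. W \<inter> V \<noteq> {}}"
    using stone[OF \<rho>] by blast
  define \<U> where "\<U> = (\<lambda>W. W \<inter> X) ` \<W>"
  have "x0 \<in> \<Union>\<W>" using W(2) by simp
  then obtain W0 where W0: "W0 \<in> \<W>" "x0 \<in> W0" by blast
  define U0 where "U0 = W0 \<inter> X"
  have cov: "(\<U>, U0) \<in> cov X x0"
  proof -
    have o: "\<forall>U\<in>\<U>. openin (top_of_set X) U"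
    proof
      fix U assume "U \<in> \<U>"
      then obtain W where Wm: "W \<in> \<W>" "U = W \<inter> X" by (auto simp: \<U>_def)
      then have "open W" using W(1) by blast
      then show "openin (top_of_set X) U" unfolding openin_open using Wm(2) by blast
    qed
    have u: "\<Union>\<U> = X" using W(2) by (auto simp: \<U>_def)
    have lf: "\<forall>x\<in>X. \<exists>V. openin (top_of_set X) V \<and> x \<in> V \<and> finite {U\<in>\<U>. U \<inter> V \<noteq> {}}"
    proof
      fix x assume x: "x \<in> X"
      obtain V where V: "open V" "x \<in> V" "finite {W\<in>\<W>. W \<inter> V \<noteq> {}}" using W(3) by blast
      have "{U\<in>\<U>. U \<inter> (V \<inter> X) \<noteq> {}} \<subseteq> (\<lambda>W. W \<inter> X) ` {W\<in>\<W>. W \<inter> V \<noteq> {}}"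
        by (auto simp: \<U>_def)
      then have "finite {U\<in>\<U>. U \<inter> (V \<inter> X) \<noteq> {}}"
        by (rule finite_subset) (rule finite_imageI[OF V(3)])
      moreover have "openin (top_of_set X) (V \<inter> X)" unfolding openin_open using V(1) by blast
      ultimately show "\<exists>V. openin (top_of_set X) V \<and> x \<in> V \<and> finite {U\<in>\<U>. U \<inter> V \<noteq> {}}"
        using V(2) x by blast
    qed
    have "U0 \<in> \<U>" "x0 \<in> U0" using W0 assms(2) by (auto simp: \<U>_def U0_def)
    then show ?thesis using o u lf by (simp add: cov_def locally_finite_open_cover_def)
  qed
  have small: "dist u v \<le> r/2" if U: "U \<in> \<U>" and uv: "u \<in> U" "v \<in> U" for U u v
  proof -
    obtain W where Wm: "W \<in> \<W>" "U = W \<inter> X" using U by (auto simp: \<U>_def)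
    then obtain s where "W \<subseteq> ball s \<rho>" using W(1) by blast
    then have "dist s u < \<rho>" "dist s v < \<rho>" using uv Wm by auto
    moreover have "dist u v \<le> dist u s + dist s v" by (rule dist_triangle)
    ultimately have "dist u v < 2 * \<rho>" by (simp add: dist_commute)
    then show ?thesis by (simp add: \<rho>_def)
  qed
  have c: "0 \<le> r/2" using assms(3) by simp
  have gens: "goodcls X x0 (r/2) h" if "h \<in> (spanier_gens X \<U> x0 :: (real^'n \<Rightarrow> 'a) set set)" for h
  proof -
    from that obtain g \<gamma> f U where h: "h = loop_class X x0 g" and
      P: "path \<gamma>" "path_image \<gamma> \<subseteq> X" "pathstart \<gamma> = x0"
      "nloop X (pathfinish \<gamma>) f" "U \<in> \<U>" "f ` ncube \<subseteq> U" "nloop X x0 g" "path_conjugate X \<gamma> f g"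
      unfolding spanier_gens_def by blast
    show ?thesis unfolding h
      by (rule gen_good[OF assms(2) P(1,2,3,4,6,7,8) small[OF P(5)] c])
  qed
  have good: "goodcls X x0 (r/2) a" if "a \<in> (spanier_group X \<U> x0 :: (real^'n \<Rightarrow> 'a) set set)" for a
    using that unfolding spanier_group_def
  proof (induction rule: generate.induct)
    case one
    then show ?case using good_one[OF assms(2) c] by (simp add: pi_one)
  next
    case (incl h)
    then show ?case by (rule gens)
  next
    case (inv h)
    then show ?case using good_inv[OF assms(2) gens] by blast
  next
    case (eng h1 h2)
    then show ?case using good_mult[OF assms(2)] by blast
  qed
  have sub: "(spanier_group X \<U> x0 :: (real^'n \<Rightarrow> 'a) set set) \<subseteq> rho_ball X x0 r"
  proof
    fix a :: "(real^'n \<Rightarrow> 'a) set"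
    assume "a \<in> spanier_group X \<U> x0"
    then have ga: "goodcls X x0 (r/2) a" by (rule good)
    then obtain \<alpha> \<beta> where ab: "\<alpha> \<in> a" "\<beta> \<in> loop_class X x0 (\<lambda>x. x0)" "loop_mu \<alpha> \<beta> \<le> r/2"
      and a: "a \<in> pi_n_set X x0" unfolding goodcls_def by blast
    obtain f where f: "nloop X x0 f" "a = loop_class X x0 f" using carrier_ex[OF a] by blast
    have "loop_rho a (loop_class X x0 (\<lambda>x. x0)) \<le> loop_mu \<alpha> \<beta>"
      by (rule rho_le[where X=X and p=x0]) (use ab f class_nloop in auto)
    then show "a \<in> rho_ball X x0 r" using a ab(3) assms(3) by (simp add: rho_ball_def pi_one)
  qed
  show ?thesis using cov sub by (intro bexI[where x="(\<U>, U0)"]) auto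
qed

end
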